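(* Let $\mathcal A$ be a perfect algebra over a field $k$ and $S$ a commutative, associative, unital $k$-algebra. If the map $\psi:C(\mathcal A)\otimes S\to C(\mathcal A\otimes S)$, $\gamma\otimes s\mapsto\gamma\otimes L_s$, is an isomorphism, then $$\mathcal D(\mathcal A\otimes S)=\mathcal D(\mathcal A)\overleftarrow{\otimes} S\ \oplus\ C(\mathcal A)\overrightarrow{\otimes}\mathcal D(S).\qquad( * )$$ In particular $( * )$ holds if one of the following is satisfied: (i) $S$ is finite dimensional; (ii) $\mathcal A$ is finitely generated (as an algebra over $k$); (iii) $\mathcal A$ is a pfgc algebra; (iv) $\mathcal A$ is unital. Finally, if one of the following is satisfied: (i) $\mathcal A$ or $S$ is finite dimensional; (ii) $C(\mathcal A)$ is finite dimensional or $S$ is finitely generated over $k$, and one of the following holds: (a) $\mathcal A$ is finitely generated over $k$, (b) $\mathcal A$ is finitely generated as a $C(\mathcal A)$-module and $[\mathcal D(\mathcal A),C(\mathcal A)]=0$, (c) $\mathcal A$ is finitely generated as a $dC(\mathcal A)$-module; then $$\mathcal D(\mathcal A\otimes S)=\mathcal D(\mathcal A)\otimes S\ \oplus\ C(\mathcal A)\otimes\mathcal D(S).$$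
   Context: Algebras are $k$-vector spaces with a bilinear product (not necessarily associative); perfect means $\mathcal A\mathcal A=\mathcal A$. $\mathcal D(\cdot)$ denotes the Lie algebra of derivations. $C(\mathcal A)=\{\gamma\in\operatorname{End}(\mathcal A)\mid\gamma(xy)=\gamma(x)y=x\gamma(y)\}$ is the centroid (commutative when $\mathcal A$ is perfect) and $\mathcal A$ is a $C(\mathcal A)$-module via $\gamma\cdot a=\gamma(a)$; $L_s$ is left multiplication by $s$ on $S$. $\mathcal A$ is pfgc if $\mathcal A\neq0$, perfect, and finitely generated as a $C(\mathcal A)$-module. $dC(\mathcal A)=\{\gamma\in C(\mathcal A)\mid[\gamma,\mathcal D(\mathcal A)]=0\}$. A family $\{f_i\}$ of endomorphisms of a vector space $V$ is summable if for each $v\in V$, $f_i(v)=0$ for all but finitely many $i$ (then $\sum_if_i$ is defined pointwise). For subspaces $E_V\subseteq\operatorname{End}(V)$, $E_W\subseteq\operatorname{End}(W)$: $E_V\overleftarrow{\otimes}E_W$ is the set of operators $\sum_i f_i\otimes g_i$ on $V\otimes W$ with $\{f_i\}\subseteq E_V$ summable on $V$ and $\{g_i\}\subseteq E_W$ arbitrary; given a basis $\{f_i\}$ of $E_V$, $E_V\overrightarrow{\otimes}E_W$ is the set of $\sum_i f_i\otimes g_i$ with $\{g_i\}\subseteq E_W$ summable on $W$. $S$ is identified with a subspace of $\operatorname{End}(S)$ via left multiplication, and all these spaces are regarded inside $\operatorname{End}(\mathcal A\otimes S)$. *)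

theory Defs
  imports Complex_Main "HOL-Library.Function_Algebras"
begin

definition fscale :: "('k \<Rightarrow> 'v \<Rightarrow> 'v) \<Rightarrow> 'k \<Rightarrow> ('u \<Rightarrow> 'v) \<Rightarrow> ('u \<Rightarrow> 'v)" where
  "fscale sc c f = (\<lambda>x. sc c (f x))"

definition bilinear_on ::
  "('k::field \<Rightarrow> 'v::ab_group_add \<Rightarrow> 'v) \<Rightarrow> 'v set \<Rightarrow> ('k \<Rightarrow> 'w::ab_group_add \<Rightarrow> 'w)
    \<Rightarrow> ('k \<Rightarrow> 'u::ab_group_add \<Rightarrow> 'u) \<Rightarrow> ('v \<Rightarrow> 'w \<Rightarrow> 'u) \<Rightarrow> bool" where
  "bilinear_on sv V sw su b \<longleftrightarrow>
     (\<forall>a\<in>V. Vector_Spaces.linear sw su (b a)) \<and>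
     (\<forall>w. \<forall>x\<in>V. \<forall>y\<in>V. b (x + y) w = b x w + b y w) \<and>
     (\<forall>w c. \<forall>x\<in>V. b (sv c x) w = su c (b x w))"

definition is_tensor_product ::
  "('k::field \<Rightarrow> 'v::ab_group_add \<Rightarrow> 'v) \<Rightarrow> 'v set \<Rightarrow> ('k \<Rightarrow> 'w::ab_group_add \<Rightarrow> 'w)
    \<Rightarrow> ('k \<Rightarrow> 't::ab_group_add \<Rightarrow> 't) \<Rightarrow> ('v \<Rightarrow> 'w \<Rightarrow> 't) \<Rightarrow> bool" where
  "is_tensor_product sv V sw st tn \<longleftrightarrow>
     vector_space sv \<and> module.subspace sv V \<and> vector_space sw \<and> vector_space st \<and>
     bilinear_on sv V sw st tn \<and>
     module.span st ((\<lambda>(a, w). tn a w) ` (V \<times> UNIV)) = UNIV \<and>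
     (\<forall>\<beta> :: 'v \<Rightarrow> 'w \<Rightarrow> 'k. bilinear_on sv V sw (*) \<beta> \<longrightarrow>
        (\<exists>\<phi>. Vector_Spaces.linear st (*) \<phi> \<and> (\<forall>a\<in>V. \<forall>w. \<phi> (tn a w) = \<beta> a w)))"

definition is_algebra :: "('k::field \<Rightarrow> 'a::ab_group_add \<Rightarrow> 'a) \<Rightarrow> ('a \<Rightarrow> 'a \<Rightarrow> 'a) \<Rightarrow> bool" where
  "is_algebra sk m \<longleftrightarrow> vector_space sk \<and> bilinear_on sk UNIV sk sk m"

definition perfect :: "('k::field \<Rightarrow> 'a::ab_group_add \<Rightarrow> 'a) \<Rightarrow> ('a \<Rightarrow> 'a \<Rightarrow> 'a) \<Rightarrow> bool" where
  "perfect sk m \<longleftrightarrow> module.span sk {m x y | x y. True} = UNIV"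

definition derivations :: "('k::field \<Rightarrow> 'a::ab_group_add \<Rightarrow> 'a) \<Rightarrow> ('a \<Rightarrow> 'a \<Rightarrow> 'a) \<Rightarrow> ('a \<Rightarrow> 'a) set" where
  "derivations sk m = {d. Vector_Spaces.linear sk sk d \<and> (\<forall>x y. d (m x y) = m (d x) y + m x (d y))}"

definition centroid :: "('k::field \<Rightarrow> 'a::ab_group_add \<Rightarrow> 'a) \<Rightarrow> ('a \<Rightarrow> 'a \<Rightarrow> 'a) \<Rightarrow> ('a \<Rightarrow> 'a) set" where
  "centroid sk m = {\<gamma>. Vector_Spaces.linear sk sk \<gamma> \<and>
      (\<forall>x y. \<gamma> (m x y) = m (\<gamma> x) y \<and> \<gamma> (m x y) = m x (\<gamma> y))}"

definition dcentroid :: "('k::field \<Rightarrow> 'a::ab_group_add \<Rightarrow> 'a) \<Rightarrow> ('a \<Rightarrow> 'a \<Rightarrow> 'a) \<Rightarrow> ('a \<Rightarrow> 'a) set" where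
  "dcentroid sk m = {\<gamma> \<in> centroid sk m. \<forall>d \<in> derivations sk m. \<gamma> \<circ> d = d \<circ> \<gamma>}"

definition tensor_op :: "('k::field \<Rightarrow> 't::ab_group_add \<Rightarrow> 't) \<Rightarrow> ('a \<Rightarrow> 's \<Rightarrow> 't) \<Rightarrow> ('a \<Rightarrow> 'a) \<Rightarrow> ('s \<Rightarrow> 's) \<Rightarrow> ('t \<Rightarrow> 't)"
  where
  "tensor_op st tn f g = (THE h. Vector_Spaces.linear st st h \<and> (\<forall>a s. h (tn a s) = tn (f a) (g s)))"

definition fam_summable :: "'i set \<Rightarrow> ('i \<Rightarrow> 'v \<Rightarrow> 'w::zero) \<Rightarrow> bool" where
  "fam_summable I f \<longleftrightarrow> (\<forall>v. finite {i \<in> I. f i v \<noteq> 0})"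

definition fam_sum :: "'i set \<Rightarrow> ('i \<Rightarrow> 'v \<Rightarrow> 'w::comm_monoid_add) \<Rightarrow> 'v \<Rightarrow> 'w" where
  "fam_sum I f = (\<lambda>v. \<Sum>i \<in> {i \<in> I. f i v \<noteq> 0}. f i v)"

(* E_V <-\<otimes> E_W : sums of f_i \<otimes> g_i with {f_i} \<subseteq> E_V summable, {g_i} \<subseteq> E_W arbitrary *)
definition left_tensor ::
  "('k::field \<Rightarrow> 't::ab_group_add \<Rightarrow> 't) \<Rightarrow> ('a \<Rightarrow> 's \<Rightarrow> 't) \<Rightarrow> ('a::zero \<Rightarrow> 'a) set \<Rightarrow> ('s \<Rightarrow> 's) set
     \<Rightarrow> ('t \<Rightarrow> 't) set" where
  "left_tensor st tn EV EW =
     {fam_sum I (\<lambda>i. tensor_op st tn (f i) (g i)) | (I :: ('a \<Rightarrow> 'a) set) f g.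
        f ` I \<subseteq> EV \<and> g ` I \<subseteq> EW \<and> fam_summable I f}"

(* E_V ->\<otimes> E_W w.r.t. the basis B of E_V: sums of b \<otimes> g_b with {g_b} \<subseteq> E_W summable *)
definition right_tensor ::
  "('k::field \<Rightarrow> 't::ab_group_add \<Rightarrow> 't) \<Rightarrow> ('a \<Rightarrow> 's \<Rightarrow> 't) \<Rightarrow> ('a \<Rightarrow> 'a) set \<Rightarrow> ('s::zero \<Rightarrow> 's) set
     \<Rightarrow> ('t \<Rightarrow> 't) set" where
  "right_tensor st tn B EW =
     {fam_sum B (\<lambda>b. tensor_op st tn b (g b)) | g. g ` B \<subseteq> EW \<and> fam_summable B g}"

(* ordinary tensor product E_V \<otimes> E_W inside End(A \<otimes> S) *)
definition plain_tensor ::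
  "('k::field \<Rightarrow> 't::ab_group_add \<Rightarrow> 't) \<Rightarrow> ('a \<Rightarrow> 's \<Rightarrow> 't) \<Rightarrow> ('a \<Rightarrow> 'a) set \<Rightarrow> ('s \<Rightarrow> 's) set
     \<Rightarrow> ('t \<Rightarrow> 't) set" where
  "plain_tensor st tn EV EW = module.span (fscale st) {tensor_op st tn f g | f g. f \<in> EV \<and> g \<in> EW}"

definition is_basis_of :: "('k::field \<Rightarrow> 'v::ab_group_add \<Rightarrow> 'v) \<Rightarrow> 'v set \<Rightarrow> 'v set \<Rightarrow> bool" where
  "is_basis_of sc E B \<longleftrightarrow> B \<subseteq> E \<and> \<not> module.dependent sc B \<and> module.span sc B = E"

definition direct_sum_decomp :: "'v::ab_group_add set \<Rightarrow> 'v set \<Rightarrow> 'v set \<Rightarrow> bool" where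
  "direct_sum_decomp X Y Z \<longleftrightarrow> X = {y + z | y z. y \<in> Y \<and> z \<in> Z} \<and> Y \<inter> Z = {0}"

definition finite_dim :: "('k::field \<Rightarrow> 'v::ab_group_add \<Rightarrow> 'v) \<Rightarrow> bool" where
  "finite_dim sc \<longleftrightarrow> (\<exists>B. finite B \<and> module.span sc B = UNIV)"

definition finite_dim_subspace :: "('k::field \<Rightarrow> 'v::ab_group_add \<Rightarrow> 'v) \<Rightarrow> 'v set \<Rightarrow> bool" where
  "finite_dim_subspace sc E \<longleftrightarrow> (\<exists>B. finite B \<and> B \<subseteq> E \<and> module.span sc B = E)"

definition alg_fin_gen :: "('k::field \<Rightarrow> 'a::ab_group_add \<Rightarrow> 'a) \<Rightarrow> ('a \<Rightarrow> 'a \<Rightarrow> 'a) \<Rightarrow> bool" where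
  "alg_fin_gen sk m \<longleftrightarrow> (\<exists>G. finite G \<and>
     (\<forall>U. module.subspace sk U \<and> G \<subseteq> U \<and> (\<forall>x\<in>U. \<forall>y\<in>U. m x y \<in> U) \<longrightarrow> U = UNIV))"

definition unital_alg :: "('a \<Rightarrow> 'a \<Rightarrow> 'a) \<Rightarrow> bool" where
  "unital_alg m \<longleftrightarrow> (\<exists>e. \<forall>x. m e x = x \<and> m x e = x)"

definition fin_gen_module :: "('a \<Rightarrow> 'a::comm_monoid_add) set \<Rightarrow> bool" where
  "fin_gen_module M \<longleftrightarrow> (\<exists>G. finite G \<and> (\<forall>x. \<exists>\<gamma>. (\<forall>g\<in>G. \<gamma> g \<in> M) \<and> x = (\<Sum>g\<in>G. \<gamma> g g)))"

definition pfgc :: "('k::field \<Rightarrow> 'a::ab_group_add \<Rightarrow> 'a) \<Rightarrow> ('a \<Rightarrow> 'a \<Rightarrow> 'a) \<Rightarrow> bool" where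
  "pfgc sk m \<longleftrightarrow> (\<exists>x::'a. x \<noteq> 0) \<and> perfect sk m \<and> fin_gen_module (centroid sk m)"

(* formula ( * ): D(A\<otimes>S) = D(A) <-\<otimes> S \<oplus> C(A) ->\<otimes> D(S), for every basis of C(A) *)
definition star_decomp ::
  "('k::field \<Rightarrow> 'a::ab_group_add \<Rightarrow> 'a) \<Rightarrow> ('a \<Rightarrow> 'a \<Rightarrow> 'a) \<Rightarrow> ('k \<Rightarrow> 's::comm_ring_1 \<Rightarrow> 's)
    \<Rightarrow> ('k \<Rightarrow> 't::ab_group_add \<Rightarrow> 't) \<Rightarrow> ('a \<Rightarrow> 's \<Rightarrow> 't) \<Rightarrow> ('t \<Rightarrow> 't \<Rightarrow> 't) \<Rightarrow> bool" where
  "star_decomp sA mA sS sT tn mT \<longleftrightarrow>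
     (\<forall>B. is_basis_of (fscale sA) (centroid sA mA) B \<longrightarrow>
        direct_sum_decomp (derivations sT mT)
          (left_tensor sT tn (derivations sA mA) (range (\<lambda>s. (*) s)))
          (right_tensor sT tn B (derivations sS (*))))"

definition plain_decomp ::
  "('k::field \<Rightarrow> 'a::ab_group_add \<Rightarrow> 'a) \<Rightarrow> ('a \<Rightarrow> 'a \<Rightarrow> 'a) \<Rightarrow> ('k \<Rightarrow> 's::comm_ring_1 \<Rightarrow> 's)
    \<Rightarrow> ('k \<Rightarrow> 't::ab_group_add \<Rightarrow> 't) \<Rightarrow> ('a \<Rightarrow> 's \<Rightarrow> 't) \<Rightarrow> ('t \<Rightarrow> 't \<Rightarrow> 't) \<Rightarrow> bool" where
  "plain_decomp sA mA sS sT tn mT \<longleftrightarrow>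
     direct_sum_decomp (derivations sT mT)
       (plain_tensor sT tn (derivations sA mA) (range (\<lambda>s. (*) s)))
       (plain_tensor sT tn (centroid sA mA) (derivations sS (*)))"

end

theory Submission
  imports Defs
begin

lemma vs_fscale:
  assumes "vector_space sc"
  shows "vector_space (fscale sc :: 'k::field \<Rightarrow> ('u \<Rightarrow> 'v::ab_group_add) \<Rightarrow> _)"
  using assms unfolding vector_space_def fscale_def
  by (auto simp: fun_eq_iff)

lemma vs_field: "vector_space ((*) :: 'k::field \<Rightarrow> 'k \<Rightarrow> 'k)"
  by unfold_locales (auto simp: algebra_simps)

lemma sum_fun_apply: "(\<Sum>i\<in>I. (F i :: 'u \<Rightarrow> 'v::comm_monoid_add)) x = (\<Sum>i\<in>I. F i x)"
  by (induction I rule: infinite_finite_induct) auto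

lemma linD:
  assumes "Vector_Spaces.linear s1 s2 f"
  shows "f (x + y) = f x + f y" "f (s1 c x) = s2 c (f x)" "f 0 = 0"
    "f (sum g I) = (\<Sum>i\<in>I. f (g i))" "f (x - y) = f x - f y" "f (- x) = - f x"
  using module_hom.add[OF module_hom_linearI[OF assms]]
    module_hom.scale[OF module_hom_linearI[OF assms]]
    module_hom.zero[OF module_hom_linearI[OF assms]]
    module_hom.sum[OF module_hom_linearI[OF assms]]
    module_hom.diff[OF module_hom_linearI[OF assms]]
    module_hom.neg[OF module_hom_linearI[OF assms]]
  by auto

lemma linI:
  assumes "vector_space s1" "vector_space s2"
    "\<And>x y. f (x + y) = f x + f y" "\<And>c x. f (s1 c x) = s2 c (f x)"
  shows "Vector_Spaces.linear s1 s2 f"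
  using assms by (auto simp: Vector_Spaces.linear_iff)

locale TT = vA: vector_space sA + vS: vector_space sS + vT: vector_space sT
  for sA :: "'k::field \<Rightarrow> 'a::ab_group_add \<Rightarrow> 'a" and mA :: "'a \<Rightarrow> 'a \<Rightarrow> 'a"
    and sS :: "'k \<Rightarrow> 's::comm_ring_1 \<Rightarrow> 's"
    and sT :: "'k \<Rightarrow> 't::ab_group_add \<Rightarrow> 't" and tn :: "'a \<Rightarrow> 's \<Rightarrow> 't" and mT :: "'t \<Rightarrow> 't \<Rightarrow> 't" +
  assumes A_alg: "is_algebra sA mA"
    and A_perfect: "perfect sA mA"
    and S_alg: "\<forall>c x y. sS c (x * y) = sS c x * y"
    and T_tensor: "is_tensor_product sA UNIV sS sT tn"
    and T_alg: "is_algebra sT mT"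
    and T_mult: "\<forall>a b s t. mT (tn a s) (tn b t) = tn (mA a b) (s * t)"
begin

lemma tn_lin2: "Vector_Spaces.linear sS sT (tn a)"
  using T_tensor unfolding is_tensor_product_def bilinear_on_def by auto

lemma tn_add1: "tn (x + y) s = tn x s + tn y s"
  and tn_scale1: "tn (sA c x) s = sT c (tn x s)"
  using T_tensor unfolding is_tensor_product_def bilinear_on_def by auto

lemma tn_add2: "tn a (x + y) = tn a x + tn a y"
  and tn_scale2: "tn a (sS c x) = sT c (tn a x)"
  and tn_zero2[simp]: "tn a 0 = 0"
  and tn_sum2: "tn a (sum g I) = (\<Sum>i\<in>I. tn a (g i))"
  and tn_diff2: "tn a (x - y) = tn a x - tn a y"
  using linD[OF tn_lin2] by auto

lemma tn_lin1: "Vector_Spaces.linear sA sT (\<lambda>a. tn a s)"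
  by (rule linI) (auto simp: tn_add1 tn_scale1 vA.vector_space_axioms vT.vector_space_axioms)

lemma tn_zero1[simp]: "tn 0 s = 0"
  and tn_sum1: "tn (sum g I) s = (\<Sum>i\<in>I. tn (g i) s)"
  and tn_diff1: "tn (x - y) s = tn x s - tn y s"
  using linD[OF tn_lin1] by auto

lemma tn_scale12: "tn (sA c x) s = tn x (sS c s)"
  by (simp add: tn_scale1 tn_scale2)

lemma T_span: "vT.span ((\<lambda>(a, w). tn a w) ` (UNIV \<times> UNIV)) = UNIV"
  using T_tensor unfolding is_tensor_product_def by auto

lemma T_univ: "bilinear_on sA UNIV sS (*) \<beta> \<Longrightarrow>
    \<exists>\<phi>. Vector_Spaces.linear sT (*) \<phi> \<and> (\<forall>a w. \<phi> (tn a w) = \<beta> a w)"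
  using T_tensor unfolding is_tensor_product_def by auto

lemma mA_lin2: "Vector_Spaces.linear sA sA (mA a)"
  using A_alg unfolding is_algebra_def bilinear_on_def by auto

lemma mA_add1: "mA (x + y) s = mA x s + mA y s"
  and mA_scale1: "mA (sA c x) s = sA c (mA x s)"
  using A_alg unfolding is_algebra_def bilinear_on_def by auto

lemma mA_lin1: "Vector_Spaces.linear sA sA (\<lambda>a. mA a s)"
  by (rule linI) (auto simp: mA_add1 mA_scale1 vA.vector_space_axioms)

lemma mA_add2: "mA a (x + y) = mA a x + mA a y"
  and mA_scale2: "mA a (sA c x) = sA c (mA a x)"
  and mA_zero2[simp]: "mA a 0 = 0"
  and mA_sum2: "mA a (sum g I) = (\<Sum>i\<in>I. mA a (g i))"
  and mA_diff2: "mA a (x - y) = mA a x - mA a y"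
  using linD[OF mA_lin2] by auto

lemma mA_zero1[simp]: "mA 0 s = 0"
  and mA_sum1: "mA (sum g I) s = (\<Sum>i\<in>I. mA (g i) s)"
  and mA_diff1: "mA (x - y) s = mA x s - mA y s"
  using linD[OF mA_lin1] by auto

lemma mT_lin2: "Vector_Spaces.linear sT sT (mT a)"
  using T_alg unfolding is_algebra_def bilinear_on_def by auto

lemma mT_add1: "mT (x + y) s = mT x s + mT y s"
  and mT_scale1: "mT (sT c x) s = sT c (mT x s)"
  using T_alg unfolding is_algebra_def bilinear_on_def by auto

lemma mT_lin1: "Vector_Spaces.linear sT sT (\<lambda>a. mT a s)"
  by (rule linI) (auto simp: mT_add1 mT_scale1 vT.vector_space_axioms)

lemma mT_add2: "mT a (x + y) = mT a x + mT a y"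
  and mT_scale2: "mT a (sT c x) = sT c (mT a x)"
  and mT_zero2[simp]: "mT a 0 = 0"
  and mT_sum2: "mT a (sum g I) = (\<Sum>i\<in>I. mT a (g i))"
  and mT_diff2: "mT a (x - y) = mT a x - mT a y"
  using linD[OF mT_lin2] by auto

lemma mT_zero1[simp]: "mT 0 s = 0"
  and mT_sum1: "mT (sum g I) s = (\<Sum>i\<in>I. mT (g i) s)"
  and mT_diff1: "mT (x - y) s = mT x s - mT y s"
  using linD[OF mT_lin1] by auto

lemma T_mult': "mT (tn a s) (tn b t) = tn (mA a b) (s * t)"
  using T_mult by auto

lemma T_induct:
  assumes "\<And>a s. P (tn a s)" "P 0" "\<And>x y. P x \<Longrightarrow> P y \<Longrightarrow> P (x + y)"
    "\<And>c x. P x \<Longrightarrow> P (sT c x)"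
  shows "P t"
proof -
  have "t \<in> vT.span ((\<lambda>(a, w). tn a w) ` (UNIV \<times> UNIV))" using T_span by auto
  then show ?thesis
  proof (induction rule: vT.span_induct)
    case base show ?case using assms by (auto simp: vT.subspace_def)
  next
    case (step x) then show ?case using assms by auto
  qed
qed

lemma A_induct:
  assumes "\<And>x y. P (mA x y)" "P 0" "\<And>x y. P x \<Longrightarrow> P y \<Longrightarrow> P (x + y)"
    "\<And>c x. P x \<Longrightarrow> P (sA c x)"
  shows "P a"
proof -
  have "a \<in> vA.span {mA x y | x y. True}" using A_perfect unfolding perfect_def by auto
  then show ?thesis
  proof (induction rule: vA.span_induct)
    case base show ?case using assms by (auto simp: vA.subspace_def)
  next
    case (step x) then show ?case using assms by auto
  qed
qed

lemma lin_eq_T: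
  assumes "Vector_Spaces.linear sT s2 X" "Vector_Spaces.linear sT s2 Y"
    "\<And>a s. X (tn a s) = Y (tn a s)"
  shows "X = Y"
proof
  fix t show "X t = Y t"
    by (induction t rule: T_induct) (auto simp: assms linD[OF assms(1)] linD[OF assms(2)])
qed

end

context TT begin

definition JB where "JB = (SOME J. vS.independent J \<and> vS.span J = UNIV)"

lemma JB: "vS.independent JB" "vS.span JB = UNIV"
proof -
  obtain B where "vS.independent B" "UNIV \<subseteq> vS.span B"
    using vS.basis_exists[of UNIV] by metis
  then have "\<exists>J. vS.independent J \<and> vS.span J = UNIV" by auto
  then show "vS.independent JB" "vS.span JB = UNIV"
    unfolding JB_def by (metis (mono_tags, lifting) someI_ex)+
qed

definition lam where "lam j s = vS.representation JB s j"

lemma lam_finite: "finite {j. lam j s \<noteq> 0}"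
  unfolding lam_def by (rule vS.finite_representation)

lemma lam_JB: "lam j s \<noteq> 0 \<Longrightarrow> j \<in> JB"
  unfolding lam_def by (rule vS.representation_ne_zero)

lemma lam_expand: "(\<Sum>j | lam j s \<noteq> 0. sS (lam j s) j) = s"
  unfolding lam_def using vS.sum_nonzero_representation_eq[OF JB(1)] JB(2) by auto

lemma lam_expandU: "finite U \<Longrightarrow> {j. lam j s \<noteq> 0} \<subseteq> U \<Longrightarrow> (\<Sum>j\<in>U. sS (lam j s) j) = s"
  by (subst lam_expand[symmetric, of s], rule sum.mono_neutral_right) auto

lemma lam_add: "lam j (x + y) = lam j x + lam j y"
  unfolding lam_def using vS.representation_add[OF JB(1)] JB(2) by auto

lemma lam_scale: "lam j (sS c x) = c * lam j x"
  unfolding lam_def using vS.representation_scale[OF JB(1)] JB(2) by auto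

lemma lam_basis: "j' \<in> JB \<Longrightarrow> lam j j' = (if j = j' then 1 else 0)"
  unfolding lam_def using vS.representation_basis[OF JB(1)] by auto

lemma lam_lin: "Vector_Spaces.linear sS (*) (lam j)"
  by (rule linI) (auto simp: lam_add lam_scale vS.vector_space_axioms vs_field)

lemma lam_zero_all: "(\<And>j. lam j s = 0) \<Longrightarrow> s = 0"
  using lam_expand[of s] by auto

lemma TI:
  assumes F: "finite F" "F \<subseteq> JB" and eq: "(\<Sum>j\<in>F. tn (x j) j) = 0" and j0: "j0 \<in> F"
  shows "x j0 = 0"
proof (rule ccontr)
  assume nz: "x j0 \<noteq> 0"
  have vp: "vector_space_pair sA ((*) :: 'k \<Rightarrow> 'k \<Rightarrow> 'k)"
    by (simp add: vector_space_pair_def vA.vector_space_axioms vs_field)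
  have ind: "vA.independent {x j0}" using nz by simp
  obtain \<mu> where mu: "Vector_Spaces.linear sA (*) \<mu>" "\<mu> (x j0) = 1"
    using vector_space_pair.linear_independent_extend[OF vp ind, of "\<lambda>_. 1"] by auto
  define \<beta> where "\<beta> a s = \<mu> a * lam j0 s" for a s
  have "bilinear_on sA UNIV sS (*) \<beta>"
    unfolding bilinear_on_def \<beta>_def
  proof (intro conjI ballI allI)
    fix a show "Vector_Spaces.linear sS (*) (\<lambda>s. \<mu> a * lam j0 s)"
      by (rule linI) (auto simp: lam_add lam_scale vS.vector_space_axioms vs_field algebra_simps)
  qed (auto simp: linD[OF mu(1)] algebra_simps)
  then obtain \<phi> where phi: "Vector_Spaces.linear sT (*) \<phi>" "\<And>a w. \<phi> (tn a w) = \<beta> a w"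
    using T_univ by blast
  have "\<phi> (\<Sum>j\<in>F. tn (x j) j) = (\<Sum>j\<in>F. \<mu> (x j) * lam j0 j)"
    by (simp add: linD[OF phi(1)] phi(2) \<beta>_def)
  also have "\<dots> = (\<Sum>j\<in>F. if j = j0 then \<mu> (x j) else 0)"
    using F by (intro sum.cong) (auto simp: lam_basis)
  also have "\<dots> = 1" using F j0 mu by (simp add: sum.delta)
  finally show False using eq linD(3)[OF phi(1)] by simp
qed

definition Rep where
  "Rep t x \<longleftrightarrow> finite {j. x j \<noteq> 0} \<and> {j. x j \<noteq> 0} \<subseteq> JB \<and> t = (\<Sum>j | x j \<noteq> 0. tn (x j) j)"

lemma sumU: "finite U \<Longrightarrow> {j. x j \<noteq> 0} \<subseteq> U \<Longrightarrow>
   (\<Sum>j\<in>U. tn (x j) (g j)) = (\<Sum>j | x j \<noteq> 0. tn (x j) (g j))"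
  by (rule sum.mono_neutral_right) auto

lemma Rep_unique: assumes "Rep t x" "Rep t y" shows "x = y"
proof
  fix j
  let ?U = "{j. x j \<noteq> 0} \<union> {j. y j \<noteq> 0}"
  have fin: "finite ?U" and sub: "?U \<subseteq> JB" using assms unfolding Rep_def by auto
  have "(\<Sum>i\<in>?U. tn (x i - y i) i) = (\<Sum>i\<in>?U. tn (x i) i) - (\<Sum>i\<in>?U. tn (y i) i)"
    by (simp add: tn_diff1 sum_subtractf)
  also have "\<dots> = 0"
    using assms fin sumU[of ?U x "\<lambda>j. j"] sumU[of ?U y "\<lambda>j. j"] unfolding Rep_def by auto
  finally have z: "(\<Sum>i\<in>?U. tn (x i - y i) i) = 0" .
  show "x j = y j"
  proof (cases "j \<in> ?U")
    case True then show ?thesis using TI[OF fin sub z True] by simp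
  qed auto
qed

lemma Rep_exists: "\<exists>x. Rep t x"
proof (induction t rule: T_induct)
  case (1 a s)
  let ?x = "\<lambda>j. sA (lam j s) a"
  let ?U = "{j. lam j s \<noteq> 0}"
  have sub: "{j. ?x j \<noteq> 0} \<subseteq> ?U" by auto
  have "(\<Sum>j | ?x j \<noteq> 0. tn (?x j) j) = (\<Sum>j\<in>?U. tn (?x j) j)"
    by (rule sumU[symmetric]) (use sub lam_finite in auto)
  also have "\<dots> = tn a (\<Sum>j\<in>?U. sS (lam j s) j)"
    by (simp add: tn_sum2 tn_scale12)
  also have "\<dots> = tn a s" by (simp add: lam_expand)
  finally have "Rep (tn a s) ?x"
    unfolding Rep_def using sub lam_finite lam_JB by (auto intro: finite_subset)
  then show ?case by blast
next
  case 2
  have "Rep 0 (\<lambda>_. 0)" unfolding Rep_def by auto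
  then show ?case by blast
next
  case (3 t1 t2)
  then obtain x y where xy: "Rep t1 x" "Rep t2 y" by blast
  let ?z = "\<lambda>j. x j + y j"
  let ?U = "{j. x j \<noteq> 0} \<union> {j. y j \<noteq> 0}"
  have fin: "finite ?U" and sub: "?U \<subseteq> JB" using xy unfolding Rep_def by auto
  have sz: "{j. ?z j \<noteq> 0} \<subseteq> ?U" by auto
  have "(\<Sum>j | ?z j \<noteq> 0. tn (?z j) j) = (\<Sum>j\<in>?U. tn (?z j) j)"
    by (rule sumU[symmetric]) (use sz fin in auto)
  also have "\<dots> = (\<Sum>j\<in>?U. tn (x j) j) + (\<Sum>j\<in>?U. tn (y j) j)"
    by (simp add: tn_add1 sum.distrib)
  also have "\<dots> = t1 + t2" using xy fin sumU[of ?U x "\<lambda>j. j"] sumU[of ?U y "\<lambda>j. j"] unfolding Rep_def by auto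
  finally have "Rep (t1 + t2) ?z"
    unfolding Rep_def using sz fin sub by (auto intro: finite_subset)
  then show ?case by blast
next
  case (4 c t)
  then obtain x where x: "Rep t x" by blast
  let ?z = "\<lambda>j. sA c (x j)"
  let ?U = "{j. x j \<noteq> 0}"
  have fin: "finite ?U" and sub: "?U \<subseteq> JB" using x unfolding Rep_def by auto
  have sz: "{j. ?z j \<noteq> 0} \<subseteq> ?U" by auto
  have "(\<Sum>j | ?z j \<noteq> 0. tn (?z j) j) = (\<Sum>j\<in>?U. tn (?z j) j)"
    by (rule sumU[symmetric]) (use sz fin in auto)
  also have "\<dots> = sT c (\<Sum>j\<in>?U. tn (x j) j)"
    by (simp add: tn_scale1 vT.scale_sum_right)
  also have "\<dots> = sT c t" using x fin sumU[of ?U x "\<lambda>j. j"] unfolding Rep_def by auto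
  finally have "Rep (sT c t) ?z"
    unfolding Rep_def using sz fin sub by (auto intro: finite_subset)
  then show ?case by blast
qed

definition coord where "coord t = (SOME x. Rep t x)"

lemma Rep_coord: "Rep t (coord t)"
  unfolding coord_def using Rep_exists by (metis someI_ex)

lemma coord_eqI: "Rep t x \<Longrightarrow> coord t = x"
  using Rep_unique Rep_coord by blast

lemma coord_finite: "finite {j. coord t j \<noteq> 0}"
  and coord_JB: "coord t j \<noteq> 0 \<Longrightarrow> j \<in> JB"
  and coord_expand: "t = (\<Sum>j | coord t j \<noteq> 0. tn (coord t j) j)"
  using Rep_coord[of t] unfolding Rep_def by auto

lemma coord_expandU: "finite U \<Longrightarrow> {j. coord t j \<noteq> 0} \<subseteq> U \<Longrightarrow>
  t = (\<Sum>j\<in>U. tn (coord t j) j)"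
  using sumU[of U "coord t" "\<lambda>j. j"] coord_expand[of t] by auto

lemma Rep_via_U:
  assumes "finite U" "U \<subseteq> JB" "{j. x j \<noteq> 0} \<subseteq> U" "t = (\<Sum>j\<in>U. tn (x j) j)"
  shows "Rep t x"
  unfolding Rep_def using assms sumU[of U x "\<lambda>j. j"] by (auto intro: finite_subset)

lemma coord_add: "coord (t1 + t2) = (\<lambda>j. coord t1 j + coord t2 j)"
proof (rule coord_eqI)
  let ?U = "{j. coord t1 j \<noteq> 0} \<union> {j. coord t2 j \<noteq> 0}"
  show "Rep (t1 + t2) (\<lambda>j. coord t1 j + coord t2 j)"
  proof (rule Rep_via_U[of ?U])
    have e1: "t1 = (\<Sum>j\<in>?U. tn (coord t1 j) j)" by (rule coord_expandU) (auto simp: coord_finite)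
    have e2: "t2 = (\<Sum>j\<in>?U. tn (coord t2 j) j)" by (rule coord_expandU) (auto simp: coord_finite)
    have "(\<Sum>j\<in>?U. tn (coord t1 j + coord t2 j) j) = (\<Sum>j\<in>?U. tn (coord t1 j) j) + (\<Sum>j\<in>?U. tn (coord t2 j) j)"
      by (simp add: tn_add1 sum.distrib)
    then show "t1 + t2 = (\<Sum>j\<in>?U. tn (coord t1 j + coord t2 j) j)"
      using e1[symmetric] e2[symmetric] by simp
  qed (auto simp: coord_finite coord_JB)
qed

lemma coord_scale: "coord (sT c t) = (\<lambda>j. sA c (coord t j))"
proof (rule coord_eqI)
  let ?U = "{j. coord t j \<noteq> 0}"
  show "Rep (sT c t) (\<lambda>j. sA c (coord t j))"
  proof (rule Rep_via_U[of ?U])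
    have e1: "t = (\<Sum>j\<in>?U. tn (coord t j) j)" by (rule coord_expand)
    have "(\<Sum>j\<in>?U. tn (sA c (coord t j)) j) = sT c (\<Sum>j\<in>?U. tn (coord t j) j)"
      by (simp add: tn_scale1 vT.scale_sum_right)
    then show "sT c t = (\<Sum>j\<in>?U. tn (sA c (coord t j)) j)"
      using e1[symmetric] by simp
  qed (auto simp: coord_finite coord_JB)
qed

lemma coord_zero: "coord 0 = (\<lambda>j. 0)"
  by (rule coord_eqI) (auto simp: Rep_def)

lemma coord_sum: "coord (\<Sum>i\<in>I. t i) j = (\<Sum>i\<in>I. coord (t i) j)"
  by (induction I rule: infinite_finite_induct) (auto simp: coord_zero coord_add)

lemma coord_diff: "coord (t1 - t2) j = coord t1 j - coord t2 j"
proof -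
  have "coord t1 j = coord (t1 - t2 + t2) j" by simp
  also have "\<dots> = coord (t1 - t2) j + coord t2 j" by (simp only: coord_add)
  finally show ?thesis by (simp add: algebra_simps)
qed

lemma coord_tn: "coord (tn a s) = (\<lambda>j. sA (lam j s) a)"
proof (rule coord_eqI)
  let ?U = "{j. lam j s \<noteq> 0}"
  show "Rep (tn a s) (\<lambda>j. sA (lam j s) a)"
  proof (rule Rep_via_U[of ?U])
    have "(\<Sum>j\<in>?U. tn (sA (lam j s) a) j) = tn a (\<Sum>j\<in>?U. sS (lam j s) j)"
      by (simp add: tn_scale12 tn_sum2)
    then show "tn a s = (\<Sum>j\<in>?U. tn (sA (lam j s) a) j)"
      by (simp add: lam_expand)
  qed (auto simp: lam_finite lam_JB)
qed

lemma coord_mT_right: "coord (mT t (tn b 1)) j = mA (coord t j) b"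
proof -
  let ?U = "{j. coord t j \<noteq> 0}"
  have "Rep (mT t (tn b 1)) (\<lambda>j. mA (coord t j) b)"
  proof (rule Rep_via_U[of ?U])
    have "mT t (tn b 1) = mT (\<Sum>j\<in>?U. tn (coord t j) j) (tn b 1)"
      using coord_expand[of t, symmetric] by simp
    also have "\<dots> = (\<Sum>j\<in>?U. tn (mA (coord t j) b) j)"
      by (simp add: mT_sum1 T_mult')
    finally show "mT t (tn b 1) = (\<Sum>j\<in>?U. tn (mA (coord t j) b) j)" .
  qed (auto simp: coord_finite coord_JB)
  then show ?thesis by (simp add: coord_eqI)
qed

lemma coord_mT_left: "coord (mT (tn b 1) t) j = mA b (coord t j)"
proof -
  let ?U = "{j. coord t j \<noteq> 0}"
  have "Rep (mT (tn b 1) t) (\<lambda>j. mA b (coord t j))"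
  proof (rule Rep_via_U[of ?U])
    have "mT (tn b 1) t = mT (tn b 1) (\<Sum>j\<in>?U. tn (coord t j) j)"
      using coord_expand[of t, symmetric] by simp
    also have "\<dots> = (\<Sum>j\<in>?U. tn (mA b (coord t j)) j)"
      by (simp add: mT_sum2 T_mult')
    finally show "mT (tn b 1) t = (\<Sum>j\<in>?U. tn (mA b (coord t j)) j)" .
  qed (auto simp: coord_finite coord_JB)
  then show ?thesis by (simp add: coord_eqI)
qed

end

lemma fam_sum_eq:
  assumes "finite W" "{i\<in>I. F i v \<noteq> 0} \<subseteq> W" "W \<subseteq> I"
  shows "fam_sum I F v = (\<Sum>i\<in>W. F i v)"
  unfolding fam_sum_def using assms by (intro sum.mono_neutral_left) auto

context TT begin

lemma tensor_op_exists:
  assumes f: "Vector_Spaces.linear sA sA f" and g: "Vector_Spaces.linear sS sS g"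
  shows "\<exists>H. Vector_Spaces.linear sT sT H \<and> (\<forall>a s. H (tn a s) = tn (f a) (g s))"
proof -
  define H where "H t = (\<Sum>j | coord t j \<noteq> 0. tn (f (coord t j)) (g j))" for t
  have HU: "H t = (\<Sum>j\<in>U. tn (f (coord t j)) (g j))" if "finite U" "{j. coord t j \<noteq> 0} \<subseteq> U" for t U
    unfolding H_def using that by (intro sum.mono_neutral_left) (auto simp: linD[OF f] coord_finite)
  have lin: "Vector_Spaces.linear sT sT H"
  proof (rule linI)
    fix t1 t2
    define U where "U = {j. coord t1 j \<noteq> 0} \<union> {j. coord t2 j \<noteq> 0} \<union> {j. coord (t1 + t2) j \<noteq> 0}"
    have fin: "finite U" unfolding U_def by (intro finite_UnI coord_finite)
    have "H (t1 + t2) = (\<Sum>j\<in>U. tn (f (coord (t1 + t2) j)) (g j))" by (rule HU[OF fin]) (auto simp: U_def)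
    also have "\<dots> = (\<Sum>j\<in>U. tn (f (coord t1 j)) (g j)) + (\<Sum>j\<in>U. tn (f (coord t2 j)) (g j))"
      by (simp add: coord_add linD[OF f] tn_add1 sum.distrib)
    also have "\<dots> = H t1 + H t2"
    proof -
      have s1: "{j. coord t1 j \<noteq> 0} \<subseteq> U" and s2: "{j. coord t2 j \<noteq> 0} \<subseteq> U" by (auto simp: U_def)
      show ?thesis using HU[OF fin s1] HU[OF fin s2] by simp
    qed
    finally show "H (t1 + t2) = H t1 + H t2" .
  next
    fix c t
    define U where "U = {j. coord t j \<noteq> 0} \<union> {j. coord (sT c t) j \<noteq> 0}"
    have fin: "finite U" unfolding U_def by (intro finite_UnI coord_finite)
    have "H (sT c t) = (\<Sum>j\<in>U. tn (f (coord (sT c t) j)) (g j))" by (rule HU[OF fin]) (auto simp: U_def)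
    also have "\<dots> = sT c (\<Sum>j\<in>U. tn (f (coord t j)) (g j))"
      by (simp add: coord_scale linD[OF f] tn_scale1 vT.scale_sum_right)
    also have "\<dots> = sT c (H t)"
    proof -
      have s1: "{j. coord t j \<noteq> 0} \<subseteq> U" by (auto simp: U_def)
      show ?thesis using HU[OF fin s1] by simp
    qed
    finally show "H (sT c t) = sT c (H t)" .
  qed (auto simp: vT.vector_space_axioms)
  have gen: "H (tn a s) = tn (f a) (g s)" for a s
  proof -
    define U where "U = {j. lam j s \<noteq> 0}"
    have fin: "finite U" by (simp add: U_def lam_finite)
    have "H (tn a s) = (\<Sum>j\<in>U. tn (f (coord (tn a s) j)) (g j))"
      by (rule HU[OF fin]) (auto simp: U_def coord_tn)
    also have "\<dots> = (\<Sum>j\<in>U. tn (f a) (g (sS (lam j s) j)))"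
      by (simp add: coord_tn linD[OF f] linD[OF g] tn_scale12)
    also have "\<dots> = tn (f a) (g (\<Sum>j\<in>U. sS (lam j s) j))"
      by (simp add: tn_sum2 linD[OF g])
    also have "\<dots> = tn (f a) (g s)" using lam_expandU[OF fin, of s] by (simp add: U_def)
    finally show ?thesis .
  qed
  show ?thesis using lin gen by blast
qed

lemma tensor_op:
  assumes f: "Vector_Spaces.linear sA sA f" and g: "Vector_Spaces.linear sS sS g"
  shows "Vector_Spaces.linear sT sT (tensor_op sT tn f g)"
    "tensor_op sT tn f g (tn a s) = tn (f a) (g s)"
proof -
  obtain H where H: "Vector_Spaces.linear sT sT H" "\<forall>a s. H (tn a s) = tn (f a) (g s)"
    using tensor_op_exists[OF f g] by blast
  have "tensor_op sT tn f g = H"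
    unfolding tensor_op_def
  proof (rule the_equality)
    fix h assume h: "Vector_Spaces.linear sT sT h \<and> (\<forall>a s. h (tn a s) = tn (f a) (g s))"
    show "h = H" by (rule lin_eq_T) (use h H in auto)
  qed (use H in auto)
  then show "Vector_Spaces.linear sT sT (tensor_op sT tn f g)"
    "tensor_op sT tn f g (tn a s) = tn (f a) (g s)" using H by auto
qed

lemma bil_eq_T:
  fixes F G :: "'t \<Rightarrow> 't \<Rightarrow> 'x::ab_group_add"
  assumes F1: "\<And>x y z. F (x + y) z = F x z + F y z" and F2: "\<And>x y z. F z (x + y) = F z x + F z y"
    and F3: "\<And>c x y. F (sT c x) y = sc c (F x y)" and F4: "\<And>c x y. F x (sT c y) = sc c (F x y)"
    and G1: "\<And>x y z. G (x + y) z = G x z + G y z" and G2: "\<And>x y z. G z (x + y) = G z x + G z y"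
    and G3: "\<And>c x y. G (sT c x) y = sc c (G x y)" and G4: "\<And>c x y. G x (sT c y) = sc c (G x y)"
    and gen: "\<And>a s b t. F (tn a s) (tn b t) = G (tn a s) (tn b t)"
  shows "F x y = G x y"
proof -
  have F0: "F z 0 = 0" "F 0 z = 0" for z
    using F2[of z 0 0] F1[of 0 0 z] by auto
  have G0: "G z 0 = 0" "G 0 z = 0" for z
    using G2[of z 0 0] G1[of 0 0 z] by auto
  have inner: "F (tn a s) y = G (tn a s) y" for a s y
    by (induction y rule: T_induct) (auto simp: gen F0 G0 F2 G2 F4 G4)
  show ?thesis
    by (induction x rule: T_induct) (auto simp: inner F0 G0 F1 G1 F3 G3)
qed

lemma der_T_gen:
  assumes D: "Vector_Spaces.linear sT sT D"
    and gen: "\<And>a s b t. D (mT (tn a s) (tn b t)) = mT (D (tn a s)) (tn b t) + mT (tn a s) (D (tn b t))"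
  shows "D \<in> derivations sT mT"
proof -
  have "D (mT x y) = mT (D x) y + mT x (D y)" for x y
    by (rule bil_eq_T[where sc=sT and F="\<lambda>x y. D (mT x y)" and G="\<lambda>x y. mT (D x) y + mT x (D y)"])
      (auto simp: linD[OF D] mT_add1 mT_add2 mT_scale1 mT_scale2 vT.scale_right_distrib gen algebra_simps)
  then show ?thesis using D unfolding derivations_def by auto
qed

lemma cen_T_gen:
  assumes X: "Vector_Spaces.linear sT sT X"
    and gen1: "\<And>a s b t. X (mT (tn a s) (tn b t)) = mT (X (tn a s)) (tn b t)"
    and gen2: "\<And>a s b t. X (mT (tn a s) (tn b t)) = mT (tn a s) (X (tn b t))"
  shows "X \<in> centroid sT mT"
proof -
  have "X (mT x y) = mT (X x) y" for x y
    by (rule bil_eq_T[where sc=sT and F="\<lambda>x y. X (mT x y)" and G="\<lambda>x y. mT (X x) y"])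
      (auto simp: linD[OF X] mT_add1 mT_add2 mT_scale1 mT_scale2 gen1)
  moreover have "X (mT x y) = mT x (X y)" for x y
    by (rule bil_eq_T[where sc=sT and F="\<lambda>x y. X (mT x y)" and G="\<lambda>x y. mT x (X y)"])
      (auto simp: linD[OF X] mT_add1 mT_add2 mT_scale1 mT_scale2 gen2)
  ultimately show ?thesis using X unfolding centroid_def by auto
qed

lemma L_lin: "Vector_Spaces.linear sS sS ((*) s)"
proof (rule linI)
  fix c x
  have "s * sS c x = sS c x * s" by (simp add: mult.commute)
  also have "\<dots> = sS c (x * s)" using S_alg by simp
  finally show "s * sS c x = sS c (s * x)" by (simp add: mult.commute)
qed (auto simp: vS.vector_space_axioms algebra_simps)

lemma S_alg': "sS c (x * y) = sS c x * y" using S_alg by auto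

lemma S_alg2: "sS c (x * y) = x * sS c y"
  using linD(2)[OF L_lin, of x c y] by simp

lemma der_lin: "d \<in> derivations sk m \<Longrightarrow> Vector_Spaces.linear sk sk d"
  and cen_lin: "\<gamma> \<in> centroid sk m \<Longrightarrow> Vector_Spaces.linear sk sk \<gamma>"
  unfolding derivations_def centroid_def by auto

lemma der_mult: "d \<in> derivations sk m \<Longrightarrow> d (m x y) = m (d x) y + m x (d y)"
  unfolding derivations_def by auto

lemma cen_mult: "\<gamma> \<in> centroid sk m \<Longrightarrow> \<gamma> (m x y) = m (\<gamma> x) y"
  "\<gamma> \<in> centroid sk m \<Longrightarrow> \<gamma> (m x y) = m x (\<gamma> y)"
  unfolding centroid_def by blast+

lemma derS_one: "d \<in> derivations sS (*) \<Longrightarrow> d 1 = 0"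
  using der_mult[of d sS "(*)" 1 1] by simp

definition R where "R s = tensor_op sT tn id ((*) s)"

lemma R_lin: "Vector_Spaces.linear sT sT (R s)"
  and R_tn: "R s (tn a t) = tn a (s * t)"
  unfolding R_def using tensor_op[OF vA.linear_id L_lin] by auto

lemma R_cen: "R s \<in> centroid sT mT"
  by (rule cen_T_gen[OF R_lin]) (auto simp: R_tn T_mult' mult_ac)

lemma der_left:
  assumes f: "f \<in> derivations sA mA"
  shows "tensor_op sT tn f ((*) s) \<in> derivations sT mT"
  using tensor_op[OF der_lin[OF f] L_lin]
  by (intro der_T_gen) (auto simp: T_mult' der_mult[OF f] tn_add1 mult_ac)

lemma der_right:
  assumes g: "g \<in> centroid sA mA" and d: "d \<in> derivations sS (*)"
  shows "tensor_op sT tn g d \<in> derivations sT mT"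
proof -
  have comm: "mA (g a) b = mA a (g b)" for a b using cen_mult[OF g] by metis
  show ?thesis
    using tensor_op[OF cen_lin[OF g] der_lin[OF d]] cen_mult(1)[OF g]
    by (intro der_T_gen) (auto simp: T_mult' der_mult[OF d] tn_add2 mult_ac comm)
qed

lemma commutator_cen:
  assumes d: "d \<in> derivations sT mT" and X: "X \<in> centroid sT mT"
  shows "(\<lambda>x. d (X x) - X (d x)) \<in> centroid sT mT"
proof -
  have lin: "Vector_Spaces.linear sT sT (\<lambda>x. d (X x) - X (d x))"
    by (rule linI) (auto simp: linD[OF der_lin[OF d]] linD[OF cen_lin[OF X]] vT.vector_space_axioms
        vT.scale_right_diff_distrib)
  show ?thesis unfolding centroid_def
  proof (safe intro!: lin)
    fix x y
    show "d (X (mT x y)) - X (d (mT x y)) = mT (d (X x) - X (d x)) y"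
      by (simp add: cen_mult[OF X] der_mult[OF d] linD[OF cen_lin[OF X]] mT_diff1)
    show "d (X (mT x y)) - X (d (mT x y)) = mT x (d (X y) - X (d y))"
    proof -
      have 1: "X (mT x y) = mT x (X y)" by (rule cen_mult(2)[OF X])
      have 2: "X (mT (d x) y) = mT (d x) (X y)" by (rule cen_mult(2)[OF X])
      have 3: "X (mT x (d y)) = mT x (X (d y))" by (rule cen_mult(2)[OF X])
      have "d (X (mT x y)) - X (d (mT x y)) = (mT (d x) (X y) + mT x (d (X y))) - (mT (d x) (X y) + mT x (X (d y)))"
        by (simp only: 1 der_mult[OF d] linD(1)[OF cen_lin[OF X]] 2 3)
      also have "\<dots> = mT x (d (X y) - X (d y))" by (simp add: mT_diff2)
      finally show ?thesis .
    qed
  qed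
qed

lemma fam_summable_T:
  assumes lin: "\<And>i. i \<in> I \<Longrightarrow> Vector_Spaces.linear sT sT (F i)"
    and gen: "\<And>a s. finite {i\<in>I. F i (tn a s) \<noteq> 0}"
  shows "fam_summable I F"
  unfolding fam_summable_def
proof
  fix t show "finite {i \<in> I. F i t \<noteq> 0}"
  proof (induction t rule: T_induct)
    case (1 a s) then show ?case by (rule gen)
  next
    case 2 then show ?case by (simp add: linD[OF lin] cong: conj_cong)
  next
    case (3 x y)
    have "{i \<in> I. F i (x + y) \<noteq> 0} \<subseteq> {i \<in> I. F i x \<noteq> 0} \<union> {i \<in> I. F i y \<noteq> 0}"
      using lin by (auto simp: linD(1)[OF lin] linD(2)[OF lin])
    then show ?case using 3 by (auto intro: finite_subset)
  next
    case (4 c x)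
    have "{i \<in> I. F i (sT c x) \<noteq> 0} \<subseteq> {i \<in> I. F i x \<noteq> 0}"
      using lin by (auto simp: linD(1)[OF lin] linD(2)[OF lin])
    then show ?case using 4 by (auto intro: finite_subset)
  qed
qed

lemma fam_sum_der:
  assumes der: "\<And>i. i \<in> I \<Longrightarrow> F i \<in> derivations sT mT" and sm: "fam_summable I F"
  shows "fam_sum I F \<in> derivations sT mT"
proof -
  have fin: "finite {i\<in>I. F i v \<noteq> 0}" for v using sm unfolding fam_summable_def by auto
  let ?S = "\<lambda>v. {i\<in>I. F i v \<noteq> 0}"
  have lin: "Vector_Spaces.linear sT sT (fam_sum I F)"
  proof (rule linI)
    fix x y
    let ?W = "?S x \<union> ?S y \<union> ?S (x + y)"
    have "fam_sum I F (x + y) = (\<Sum>i\<in>?W. F i (x + y))" by (rule fam_sum_eq) (auto simp: fin)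
    also have "\<dots> = (\<Sum>i\<in>?W. F i x + F i y)"
      by (rule sum.cong) (auto simp: linD(1)[OF der_lin[OF der]])
    also have "\<dots> = (\<Sum>i\<in>?W. F i x) + (\<Sum>i\<in>?W. F i y)"
      by (simp add: sum.distrib)
    also have "\<dots> = fam_sum I F x + fam_sum I F y"
      by (subst (1 2) fam_sum_eq[of ?W]) (auto simp: fin)
    finally show "fam_sum I F (x + y) = fam_sum I F x + fam_sum I F y" .
  next
    fix c x
    let ?W = "?S x \<union> ?S (sT c x)"
    have "fam_sum I F (sT c x) = (\<Sum>i\<in>?W. F i (sT c x))" by (rule fam_sum_eq) (auto simp: fin)
    also have "\<dots> = (\<Sum>i\<in>?W. sT c (F i x))"
      by (rule sum.cong) (auto simp: linD(2)[OF der_lin[OF der]])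
    also have "\<dots> = sT c (\<Sum>i\<in>?W. F i x)"
      by (simp add: vT.scale_sum_right)
    also have "\<dots> = sT c (fam_sum I F x)"
      by (subst fam_sum_eq[of ?W]) (auto simp: fin)
    finally show "fam_sum I F (sT c x) = sT c (fam_sum I F x)" .
  qed (auto simp: vT.vector_space_axioms)
  have "fam_sum I F (mT x y) = mT (fam_sum I F x) y + mT x (fam_sum I F y)" for x y
  proof -
    let ?W = "?S x \<union> ?S y \<union> ?S (mT x y)"
    have "fam_sum I F (mT x y) = (\<Sum>i\<in>?W. F i (mT x y))" by (rule fam_sum_eq) (auto simp: fin)
    also have "\<dots> = (\<Sum>i\<in>?W. mT (F i x) y + mT x (F i y))"
      by (rule sum.cong) (auto simp: der_mult[OF der])
    also have "\<dots> = mT (\<Sum>i\<in>?W. F i x) y + mT x (\<Sum>i\<in>?W. F i y)"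
      by (simp add: sum.distrib mT_sum1 mT_sum2)
    also have "\<dots> = mT (fam_sum I F x) y + mT x (fam_sum I F y)"
      by (subst (1 2) fam_sum_eq[of ?W]) (auto simp: fin)
    finally show ?thesis .
  qed
  then show ?thesis using lin unfolding derivations_def by auto
qed

lemma fam_sum_comm:
  assumes lin: "\<And>i. i \<in> I \<Longrightarrow> F i (R s t) = R s (F i t)" and sm: "fam_summable I F"
  shows "fam_sum I F (R s t) = R s (fam_sum I F t)"
proof -
  have fin: "finite {i\<in>I. F i v \<noteq> 0}" for v using sm unfolding fam_summable_def by auto
  let ?S = "\<lambda>v. {i\<in>I. F i v \<noteq> 0}"
  let ?W = "?S t \<union> ?S (R s t)"
  have "fam_sum I F (R s t) = (\<Sum>i\<in>?W. F i (R s t))" by (rule fam_sum_eq) (auto simp: fin)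
  also have "\<dots> = R s (\<Sum>i\<in>?W. F i t)"
    by (auto simp: lin linD[OF R_lin] intro!: sum.cong)
  also have "\<dots> = R s (fam_sum I F t)"
    by (subst fam_sum_eq[of ?W]) (auto simp: fin)
  finally show ?thesis .
qed

end

sublocale TT \<subseteq> fA: vector_space "fscale sA :: 'k \<Rightarrow> ('a \<Rightarrow> 'a) \<Rightarrow> ('a \<Rightarrow> 'a)"
  by (rule vs_fscale[OF vA.vector_space_axioms])

sublocale TT \<subseteq> fT: vector_space "fscale sT :: 'k \<Rightarrow> ('t \<Rightarrow> 't) \<Rightarrow> ('t \<Rightarrow> 't)"
  by (rule vs_fscale[OF vT.vector_space_axioms])

context TT begin

lemma zero_lin: "Vector_Spaces.linear s1 s2 (\<lambda>_. 0)" if "vector_space s1" "vector_space s2"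
  using vector_space_pair.linear_zero[of s1 s2] that by (simp add: vector_space_pair_def)

lemma kill:
  assumes X: "Vector_Spaces.linear sT sT X" and c: "\<And>s t. X (R s t) = R s (X t)"
    and z: "\<And>a. X (tn a 1) = 0"
  shows "X = (\<lambda>_. 0)"
proof (rule lin_eq_T[OF X zero_lin])
  fix a s
  have "X (tn a s) = X (R s (tn a 1))" by (simp add: R_tn)
  also have "\<dots> = 0" by (simp add: c z linD[OF R_lin])
  finally show "X (tn a s) = 0" .
qed (auto simp: vT.vector_space_axioms)

lemma tensor_op_zero:
  assumes "Vector_Spaces.linear sA sA f"
  shows "tensor_op sT tn f (\<lambda>_. 0) = (\<lambda>_. 0)"
proof -
  have z: "Vector_Spaces.linear sS sS (\<lambda>_. 0::'s)" by (rule zero_lin) (auto simp: vS.vector_space_axioms)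
  show ?thesis
    by (rule lin_eq_T[OF tensor_op(1)[OF assms z] zero_lin]) (auto simp: tensor_op[OF assms z] vT.vector_space_axioms)
qed

lemma zero_derS: "(\<lambda>_. 0) \<in> derivations sS (*)"
  unfolding derivations_def by (auto intro: zero_lin simp: vS.vector_space_axioms)

lemma comm_gen:
  assumes f: "Vector_Spaces.linear sA sA f"
  shows "tensor_op sT tn f ((*) \<sigma>) (R s t) = R s (tensor_op sT tn f ((*) \<sigma>) t)"
proof -
  note T = tensor_op[OF f L_lin]
  have "(\<lambda>t. tensor_op sT tn f ((*) \<sigma>) (R s t)) = (\<lambda>t. R s (tensor_op sT tn f ((*) \<sigma>) t))"
  proof (rule lin_eq_T)
    show "Vector_Spaces.linear sT sT (\<lambda>t. tensor_op sT tn f ((*) \<sigma>) (R s t))"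
      using Vector_Spaces.linear_compose[OF R_lin T(1)] by (simp add: o_def)
    show "Vector_Spaces.linear sT sT (\<lambda>t. R s (tensor_op sT tn f ((*) \<sigma>) t))"
      using Vector_Spaces.linear_compose[OF T(1) R_lin] by (simp add: o_def)
  qed (simp add: T R_tn mult_ac)
  then show ?thesis by metis
qed

lemma left_sub:
  assumes "X \<in> left_tensor sT tn (derivations sA mA) (range (\<lambda>s. (*) s))"
  shows "X \<in> derivations sT mT" "\<And>s t. X (R s t) = R s (X t)"
proof -
  obtain I :: "('a \<Rightarrow> 'a) set" and f g where X: "X = fam_sum I (\<lambda>i. tensor_op sT tn (f i) (g i))"
    and f: "f ` I \<subseteq> derivations sA mA" and g: "g ` I \<subseteq> range (\<lambda>s. (*) s)"
    and sm: "fam_summable I f"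
  proof -
    have "\<exists>(I :: (('a \<Rightarrow> 'a) set)) f g. X = fam_sum I (\<lambda>i. tensor_op sT tn (f i) (g i)) \<and> f ` I \<subseteq> derivations sA mA \<and>
        g ` I \<subseteq> range (\<lambda>s. (*) s) \<and> fam_summable I f"
      using assms unfolding left_tensor_def by (simp only: mem_Collect_eq)
    then show ?thesis using that by (elim exE conjE) 
  qed
  define \<sigma> where "\<sigma> i = (SOME s. g i = (*) s)" for i
  have \<sigma>: "g i = (*) (\<sigma> i)" if "i \<in> I" for i
  proof -
    have "\<exists>s. g i = (*) s" using g that by auto
    then show ?thesis unfolding \<sigma>_def by (rule someI_ex)
  qed
  define F where "F i = tensor_op sT tn (f i) ((*) (\<sigma> i))" for i
  have eqF: "tensor_op sT tn (f i) (g i) = F i" if "i \<in> I" for i using \<sigma>[OF that] by (simp add: F_def)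
  have X': "X = fam_sum I F"
  proof
    fix v
    have S: "{i\<in>I. tensor_op sT tn (f i) (g i) v \<noteq> 0} = {i\<in>I. F i v \<noteq> 0}" using eqF by auto
    show "X v = fam_sum I F v" unfolding X fam_sum_def by (simp only: S) (rule sum.cong, auto simp: eqF)
  qed
  have fi: "f i \<in> derivations sA mA" if "i \<in> I" for i using f that by auto
  have smF: "fam_summable I F"
  proof (rule fam_summable_T)
    show "Vector_Spaces.linear sT sT (F i)" if "i \<in> I" for i
      unfolding F_def by (rule tensor_op(1)[OF der_lin[OF fi[OF that]] L_lin])
    fix a s
    have "{i \<in> I. F i (tn a s) \<noteq> 0} \<subseteq> {i \<in> I. f i a \<noteq> 0}"
      unfolding F_def by (auto simp: tensor_op(2)[OF der_lin[OF fi] L_lin])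
    then show "finite {i \<in> I. F i (tn a s) \<noteq> 0}"
      using sm unfolding fam_summable_def by (auto intro: finite_subset)
  qed
  show "X \<in> derivations sT mT"
    unfolding X' by (rule fam_sum_der[OF _ smF]) (simp add: F_def der_left fi)
  show "X (R s t) = R s (X t)" for s t
    unfolding X' by (rule fam_sum_comm[OF _ smF]) (use comm_gen[OF der_lin[OF fi]] in \<open>simp add: F_def\<close>)
qed

lemma right_sub:
  assumes "X \<in> right_tensor sT tn B (derivations sS (*))" and B: "B \<subseteq> centroid sA mA"
  shows "X \<in> derivations sT mT" "\<And>a. X (tn a 1) = 0"
proof -
  obtain g where X: "X = fam_sum B (\<lambda>b. tensor_op sT tn b (g b))"
    and g: "g ` B \<subseteq> derivations sS (*)" and sm: "fam_summable B g"
  proof -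
    have "\<exists>g. X = fam_sum B (\<lambda>b. tensor_op sT tn b (g b)) \<and> g ` B \<subseteq> derivations sS (*) \<and> fam_summable B g"
      using assms unfolding right_tensor_def by (simp only: mem_Collect_eq)
    then show ?thesis using that by (elim exE conjE)
  qed
  have gi: "g i \<in> derivations sS (*)" if "i \<in> B" for i using g that by auto
  have bi: "i \<in> centroid sA mA" if "i \<in> B" for i using B that by auto
  have T1: "Vector_Spaces.linear sT sT (tensor_op sT tn i (g i))" if "i \<in> B" for i
    using tensor_op(1)[OF cen_lin[OF bi[OF that]] der_lin[OF gi[OF that]]] .
  have T2: "tensor_op sT tn i (g i) (tn a s) = tn (i a) (g i s)" if "i \<in> B" for i a s
    using tensor_op(2)[OF cen_lin[OF bi[OF that]] der_lin[OF gi[OF that]]] .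
  have smF: "fam_summable B (\<lambda>b. tensor_op sT tn b (g b))"
  proof (rule fam_summable_T)
    show "Vector_Spaces.linear sT sT (tensor_op sT tn i (g i))" if "i \<in> B" for i
      using T1 that by blast
    fix a s
    have "{i \<in> B. tensor_op sT tn i (g i) (tn a s) \<noteq> 0} \<subseteq> {i \<in> B. g i s \<noteq> 0}"
      by (auto simp: T2)
    then show "finite {i \<in> B. tensor_op sT tn i (g i) (tn a s) \<noteq> 0}"
      using sm unfolding fam_summable_def by (auto intro: finite_subset)
  qed
  show "X \<in> derivations sT mT"
    unfolding X by (rule fam_sum_der[OF _ smF]) (simp add: der_right bi gi)
  show "X (tn a 1) = 0" for a
  proof -
    have "tensor_op sT tn i (g i) (tn a 1) = 0" if "i \<in> B" for i
      using T2[OF that] derS_one[OF gi[OF that]] by simp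
    then have "{i\<in>B. tensor_op sT tn i (g i) (tn a 1) \<noteq> 0} = {}" by blast
    then show ?thesis unfolding X fam_sum_def by (simp only:) simp
  qed
qed

lemma zero_left: "0 \<in> left_tensor sT tn (derivations sA mA) (range (\<lambda>s. (*) s))"
  unfolding left_tensor_def
  apply (rule CollectI)
  apply (rule exI[where x="{}"], rule exI[where x="\<lambda>i. i"], rule exI[where x="\<lambda>i. (*) 0"])
  by (auto simp: fam_sum_def fam_summable_def fun_eq_iff)

lemma zero_right:
  assumes B: "B \<subseteq> centroid sA mA"
  shows "0 \<in> right_tensor sT tn B (derivations sS (*))"
  unfolding right_tensor_def
proof (rule CollectI, rule exI[of _ "\<lambda>_ _. 0"], intro conjI)
  have "tensor_op sT tn b (\<lambda>_. 0) = (\<lambda>_. 0)" if "b \<in> B" for b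
    by (rule tensor_op_zero[OF cen_lin]) (use B that in auto)
  then show "0 = fam_sum B (\<lambda>b. tensor_op sT tn b (\<lambda>_. 0))"
    by (auto simp: fam_sum_def fun_eq_iff)
qed (auto simp: zero_derS fam_summable_def)

lemma BU:
  assumes B: "fA.independent B" and W: "finite W" "W \<subseteq> B"
    and eq: "\<And>a. (\<Sum>b\<in>W. tn (b a) (\<tau> b)) = 0" and b0: "b0 \<in> W"
  shows "\<tau> b0 = 0"
proof (rule lam_zero_all)
  fix j
  have "(\<Sum>b\<in>W. fscale sA (lam j (\<tau> b)) b) = 0"
  proof
    fix a
    have "(\<Sum>b\<in>W. fscale sA (lam j (\<tau> b)) b) a = (\<Sum>b\<in>W. sA (lam j (\<tau> b)) (b a))"
      by (simp add: sum_fun_apply fscale_def)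
    also have "\<dots> = coord (\<Sum>b\<in>W. tn (b a) (\<tau> b)) j"
      by (simp add: coord_sum coord_tn)
    also have "\<dots> = 0" by (simp add: eq coord_zero)
    finally show "(\<Sum>b\<in>W. fscale sA (lam j (\<tau> b)) b) a = 0 a" by simp
  qed
  then show "lam j (\<tau> b0) = 0"
    using fA.independentD[OF B W(1) W(2), of "\<lambda>b. lam j (\<tau> b)", OF _ b0] by blast
qed

lemma BU2:
  assumes B: "fA.independent B" and W: "finite W" "W \<subseteq> B"
    and eq: "\<And>a. (\<Sum>b\<in>W. tn (b a) (\<tau> b)) = (\<Sum>b\<in>W. tn (b a) (\<tau>' b))" and b0: "b0 \<in> W"
  shows "\<tau> b0 = \<tau>' b0"
proof -
  have "(\<lambda>b. \<tau> b - \<tau>' b) b0 = 0"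
    by (rule BU[OF B W _ b0]) (simp add: tn_diff2 sum_subtractf eq)
  then show ?thesis by simp
qed

end

context TT begin

definition CTexp where
  "CTexp B \<longleftrightarrow> (\<forall>\<chi>\<in>centroid sT mT. \<exists>W \<sigma>. finite W \<and> W \<subseteq> B \<and>
      (\<forall>a t. \<chi> (tn a t) = (\<Sum>b\<in>W. tn (b a) (\<sigma> b * t))))"

lemma der_add: "d1 \<in> derivations sT mT \<Longrightarrow> d2 \<in> derivations sT mT \<Longrightarrow> (\<lambda>x. d1 x + d2 x) \<in> derivations sT mT"
  unfolding derivations_def
  by (auto intro!: linI simp: linD vT.vector_space_axioms mT_add1 mT_add2 vT.scale_right_distrib)

lemma der_diff: "d1 \<in> derivations sT mT \<Longrightarrow> d2 \<in> derivations sT mT \<Longrightarrow> (\<lambda>x. d1 x - d2 x) \<in> derivations sT mT"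
  unfolding derivations_def
  by (auto intro!: linI simp: linD vT.vector_space_axioms mT_diff1 mT_diff2 vT.scale_right_diff_distrib)

lemma sum_ext0:
  assumes "finite V" "W \<subseteq> V" "\<And>b. b \<in> V - W \<Longrightarrow> g b = 0"
  shows "(\<Sum>b\<in>W. g b) = (\<Sum>b\<in>V. g b)"
  using assms by (intro sum.mono_neutral_left) auto

lemma core_left:
  assumes d: "d \<in> derivations sT mT"
  defines "f \<equiv> \<lambda>j a. coord (d (tn a 1)) j"
  defines "I \<equiv> {f j | j. j \<in> JB \<and> f j \<noteq> 0}"
  defines "\<sigma> \<equiv> \<lambda>i. \<Sum>j\<in>{j\<in>JB. f j = i}. j"
  defines "Y \<equiv> fam_sum I (\<lambda>i. tensor_op sT tn i ((*) (\<sigma> i)))"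
  shows "\<forall>j. f j \<in> derivations sA mA" "fam_summable JB f"
    "Y \<in> left_tensor sT tn (derivations sA mA) (range (\<lambda>s. (*) s))"
    "\<And>a. Y (tn a 1) = d (tn a 1)"
    "finite {j\<in>JB. f j \<noteq> 0} \<Longrightarrow> Y \<in> plain_tensor sT tn (derivations sA mA) (range (\<lambda>s. (*) s))"
proof -
  note dl = der_lin[OF d]
  have fder: "f j \<in> derivations sA mA" for j
  proof -
    have lin: "Vector_Spaces.linear sA sA (f j)"
      by (rule linI) (auto simp: f_def tn_add1 tn_scale1 linD[OF dl] coord_add coord_scale
          vA.vector_space_axioms)
    have "f j (mA a b) = mA (f j a) b + mA a (f j b)" for a b
    proof -
      have "tn (mA a b) 1 = mT (tn a 1) (tn b 1)" by (simp add: T_mult')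
      then show ?thesis
        by (simp add: f_def der_mult[OF d] coord_add coord_mT_right coord_mT_left)
    qed
    then show ?thesis using lin unfolding derivations_def by auto
  qed
  then show "\<forall>j. f j \<in> derivations sA mA" by auto
  have finK: "finite {j. f j a \<noteq> 0}" for a unfolding f_def by (rule coord_finite)
  show "fam_summable JB f" unfolding fam_summable_def using finK by (auto intro: finite_subset)
  have Ider: "i \<in> derivations sA mA" if "i \<in> I" for i using that fder unfolding I_def by auto
  have Isum: "fam_summable I (\<lambda>i. i)"
    unfolding fam_summable_def
  proof
    fix a
    have "{i \<in> I. i a \<noteq> 0} \<subseteq> f ` {j. f j a \<noteq> 0}" unfolding I_def by auto
    then show "finite {i \<in> I. i a \<noteq> 0}" using finK by (auto intro: finite_subset)
  qed
  show Yleft: "Y \<in> left_tensor sT tn (derivations sA mA) (range (\<lambda>s. (*) s))"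
    unfolding left_tensor_def Y_def
    apply (rule CollectI)
    apply (rule exI[where x=I], rule exI[where x="\<lambda>i. i"], rule exI[where x="\<lambda>i. (*) (\<sigma> i)"])
    using Ider Isum by auto
  show "Y (tn a 1) = d (tn a 1)" for a
  proof -
    define K where "K = {j \<in> JB. f j a \<noteq> 0}"
    have finK': "finite K" unfolding K_def using finK[of a] by (auto intro: finite_subset)
    define W where "W = f ` K"
    have finW: "finite W" unfolding W_def using finK' by auto
    have WI: "W \<subseteq> I" unfolding W_def K_def I_def by auto
    have Tlin: "\<And>i. i \<in> I \<Longrightarrow> tensor_op sT tn i ((*) (\<sigma> i)) (tn x s) = tn (i x) (\<sigma> i * s)" for x s
      using tensor_op(2)[OF der_lin[OF Ider] L_lin] .
    have supp: "{i \<in> I. tensor_op sT tn i ((*) (\<sigma> i)) (tn a 1) \<noteq> 0} \<subseteq> W"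
    proof
      fix i assume "i \<in> {i \<in> I. tensor_op sT tn i ((*) (\<sigma> i)) (tn a 1) \<noteq> 0}"
      then have iI: "i \<in> I" and nz: "i a \<noteq> 0" using Tlin by auto
      then obtain j where "j \<in> JB" "i = f j" unfolding I_def by auto
      then show "i \<in> W" using nz unfolding W_def K_def by auto
    qed
    have "Y (tn a 1) = (\<Sum>i\<in>W. tensor_op sT tn i ((*) (\<sigma> i)) (tn a 1))"
      unfolding Y_def by (rule fam_sum_eq[where F="\<lambda>i. tensor_op sT tn i ((*) (\<sigma> i))", OF finW supp WI])
    also have "\<dots> = (\<Sum>i\<in>W. \<Sum>j\<in>{j\<in>K. f j = i}. tn (f j a) j)"
    proof (rule sum.cong[OF refl])
      fix i assume iW: "i \<in> W"
      then have iI: "i \<in> I" using WI by auto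
      have S: "{j\<in>JB. f j = i} = {j\<in>K. f j = i}"
        using iW unfolding W_def K_def by auto
      show "tensor_op sT tn i ((*) (\<sigma> i)) (tn a 1) = (\<Sum>j\<in>{j\<in>K. f j = i}. tn (f j a) j)"
        using Tlin[OF iI] by (simp add: \<sigma>_def S tn_sum2)
    qed
    also have "\<dots> = (\<Sum>j\<in>K. tn (f j a) j)"
      unfolding W_def by (rule sum.image_gen[symmetric, OF finK'])
    also have "\<dots> = d (tn a 1)"
    proof -
      have "K = {j. coord (d (tn a 1)) j \<noteq> 0}" unfolding K_def f_def using coord_JB by auto
      then show ?thesis using coord_expand[of "d (tn a 1)"] by (simp add: f_def)
    qed
    finally show ?thesis .
  qed
  assume fin: "finite {j\<in>JB. f j \<noteq> 0}"
  have finI: "finite I" unfolding I_def using fin by (simp add: setcompr_eq_image)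
  have "Y = (\<Sum>i\<in>I. tensor_op sT tn i ((*) (\<sigma> i)))"
  proof
    fix v
    show "Y v = (\<Sum>i\<in>I. tensor_op sT tn i ((*) (\<sigma> i))) v"
      unfolding Y_def sum_fun_apply by (rule fam_sum_eq[OF finI]) auto
  qed
  also have "\<dots> \<in> plain_tensor sT tn (derivations sA mA) (range (\<lambda>s. (*) s))"
    unfolding plain_tensor_def
    by (rule fT.span_sum, rule fT.span_base) (use Ider in blast)
  finally show "Y \<in> plain_tensor sT tn (derivations sA mA) (range (\<lambda>s. (*) s))" .
qed

end

context TT begin

lemma core_right:
  assumes B: "fA.independent B" "B \<subseteq> centroid sA mA" and ct: "CTexp B"
    and d: "d \<in> derivations sT mT" and d0: "\<And>a. d (tn a 1) = 0"
  shows "\<exists>c. (\<forall>b. c b \<in> derivations sS (*)) \<and> fam_summable B c \<and>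
     d = fam_sum B (\<lambda>b. tensor_op sT tn b (c b)) \<and>
     (finite {b\<in>B. c b \<noteq> 0} \<longrightarrow> d \<in> plain_tensor sT tn (centroid sA mA) (derivations sS (*)))"
proof -
  note dl = der_lin[OF d]
  define \<phi> where "\<phi> s = (\<lambda>x. d (R s x) - R s (d x))" for s
  have phiC: "\<phi> s \<in> centroid sT mT" for s unfolding \<phi>_def by (rule commutator_cen[OF d R_cen])
  have ex: "\<forall>s. \<exists>p. finite (fst p) \<and> fst p \<subseteq> B \<and> (\<forall>a t. \<phi> s (tn a t) = (\<Sum>b\<in>fst p. tn (b a) (snd p b * t)))"
  proof
    fix s
    have "\<exists>W \<tau>. finite W \<and> W \<subseteq> B \<and> (\<forall>a t. \<phi> s (tn a t) = (\<Sum>b\<in>W. tn (b a) (\<tau> b * t)))"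
      using bspec[OF ct[unfolded CTexp_def] phiC[of s]] .
    then obtain W \<tau> where "finite W" "W \<subseteq> B" "\<forall>a t. \<phi> s (tn a t) = (\<Sum>b\<in>W. tn (b a) (\<tau> b * t))"
      by (elim exE conjE)
    then show "\<exists>p. finite (fst p) \<and> fst p \<subseteq> B \<and> (\<forall>a t. \<phi> s (tn a t) = (\<Sum>b\<in>fst p. tn (b a) (snd p b * t)))"
      by (intro exI[of _ "(W, \<tau>)"]) auto
  qed
  have "\<exists>P. \<forall>s. finite (fst (P s)) \<and> fst (P s) \<subseteq> B \<and> (\<forall>a t. \<phi> s (tn a t) = (\<Sum>b\<in>fst (P s). tn (b a) (snd (P s) b * t)))"
    using ex by (rule choice)
  then obtain P where P: "\<forall>s. finite (fst (P s)) \<and> fst (P s) \<subseteq> B \<and> (\<forall>a t. \<phi> s (tn a t) = (\<Sum>b\<in>fst (P s). tn (b a) (snd (P s) b * t)))"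
    by blast
  define W where "W s = fst (P s)" for s
  define c where "c b s = (if b \<in> W s then snd (P s) b else 0)" for b s
  have finW: "finite (W s)" and WB: "W s \<subseteq> B" for s using P unfolding W_def by auto
  have cz: "b \<notin> W s \<Longrightarrow> c b s = 0" for b s unfolding c_def by auto
  have phi_exp: "\<phi> s (tn a t) = (\<Sum>b\<in>V. tn (b a) (c b s * t))" if "finite V" "W s \<subseteq> V" for s a t V
  proof -
    have "\<phi> s (tn a t) = (\<Sum>b\<in>W s. tn (b a) (snd (P s) b * t))" using P unfolding W_def by auto
    also have "\<dots> = (\<Sum>b\<in>W s. tn (b a) (c b s * t))" by (rule sum.cong) (auto simp: c_def)
    also have "\<dots> = (\<Sum>b\<in>V. tn (b a) (c b s * t))" by (rule sum_ext0) (use that cz in auto)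
    finally show ?thesis .
  qed
  have dR: "d (R s x) = \<phi> s x + R s (d x)" for s x unfolding \<phi>_def by simp
  have KF: "d (tn a s) = (\<Sum>b\<in>V. tn (b a) (c b s))" if "finite V" "W s \<subseteq> V" for s a V
  proof -
    have "d (tn a s) = d (R s (tn a 1))" by (simp add: R_tn)
    also have "\<dots> = \<phi> s (tn a 1)" by (simp add: dR d0 linD[OF R_lin])
    also have "\<dots> = (\<Sum>b\<in>V. tn (b a) (c b s))" using phi_exp[OF that, of a 1] by simp
    finally show ?thesis .
  qed
  have BUc: "c b z = e b" if eq: "\<And>a. (\<Sum>b\<in>V. tn (b a) (c b z)) = (\<Sum>b\<in>V. tn (b a) (e b))"
    and V: "finite V" "V \<subseteq> B" "W z \<subseteq> V" and e0: "\<And>b. b \<notin> V \<Longrightarrow> e b = 0" for z e V b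
  proof (cases "b \<in> V")
    case True
    show ?thesis by (rule BU2[OF B(1) V(1) V(2) eq True])
  next
    case False
    then show ?thesis using e0 cz V(3) by auto
  qed
  have c_add: "c b (x + y) = c b x + c b y" for b x y
  proof -
    define V where "V = W x \<union> W y \<union> W (x + y)"
    have V: "finite V" "V \<subseteq> B" "W x \<subseteq> V" "W y \<subseteq> V" "W (x + y) \<subseteq> V"
      unfolding V_def using finW WB by auto
    show ?thesis
    proof (rule BUc[OF _ V(1,2,5)])
      fix a
      have "(\<Sum>b\<in>V. tn (b a) (c b (x + y))) = d (tn a (x + y))" using KF V by simp
      also have "\<dots> = d (tn a x) + d (tn a y)" by (simp add: tn_add2 linD[OF dl])
      also have "\<dots> = (\<Sum>b\<in>V. tn (b a) (c b x)) + (\<Sum>b\<in>V. tn (b a) (c b y))"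
        using KF[OF V(1) V(3)] KF[OF V(1) V(4)] by simp
      also have "\<dots> = (\<Sum>b\<in>V. tn (b a) (c b x + c b y))" by (simp add: tn_add2 sum.distrib)
      finally show "(\<Sum>b\<in>V. tn (b a) (c b (x + y))) = (\<Sum>b\<in>V. tn (b a) (c b x + c b y))" .
    next
      fix b assume bV: "b \<notin> V"
      have "b \<notin> W x" "b \<notin> W y" using V bV by auto
      then show "c b x + c b y = 0" by (simp add: cz)
    qed
  qed
  have c_scale: "c b (sS r x) = sS r (c b x)" for b r x
  proof -
    define V where "V = W x \<union> W (sS r x)"
    have V: "finite V" "V \<subseteq> B" "W x \<subseteq> V" "W (sS r x) \<subseteq> V"
      unfolding V_def using finW WB by auto
    show ?thesis
    proof (rule BUc[OF _ V(1,2,4)])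
      fix a
      have "(\<Sum>b\<in>V. tn (b a) (c b (sS r x))) = d (tn a (sS r x))" using KF V by simp
      also have "\<dots> = sT r (d (tn a x))" by (simp add: tn_scale2 linD[OF dl])
      also have "\<dots> = sT r (\<Sum>b\<in>V. tn (b a) (c b x))"
        using KF[OF V(1) V(3)] by simp
      also have "\<dots> = (\<Sum>b\<in>V. tn (b a) (sS r (c b x)))" by (simp add: tn_scale2 vT.scale_sum_right)
      finally show "(\<Sum>b\<in>V. tn (b a) (c b (sS r x))) = (\<Sum>b\<in>V. tn (b a) (sS r (c b x)))" .
    next
      fix b assume bV: "b \<notin> V"
      have "b \<notin> W x" using V bV by auto
      then show "sS r (c b x) = 0" by (simp add: cz)
    qed
  qed
  have c_mult: "c b (x * y) = c b x * y + x * c b y" for b x y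
  proof -
    define V where "V = W x \<union> W y \<union> W (x * y)"
    have V: "finite V" "V \<subseteq> B" "W x \<subseteq> V" "W y \<subseteq> V" "W (x * y) \<subseteq> V"
      unfolding V_def using finW WB by auto
    show ?thesis
    proof (rule BUc[OF _ V(1,2,5)])
      fix a
      have "(\<Sum>b\<in>V. tn (b a) (c b (x * y))) = d (tn a (x * y))" using KF V by simp
      also have "\<dots> = d (R x (tn a y))" by (simp add: R_tn)
      also have "\<dots> = \<phi> x (tn a y) + R x (d (tn a y))" by (rule dR)
      also have "\<dots> = (\<Sum>b\<in>V. tn (b a) (c b x * y)) + R x (\<Sum>b\<in>V. tn (b a) (c b y))"
        using phi_exp[OF V(1) V(3)] KF[OF V(1) V(4)] by simp
      also have "\<dots> = (\<Sum>b\<in>V. tn (b a) (c b x * y + x * c b y))"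
        by (simp add: linD[OF R_lin] R_tn tn_add2 sum.distrib)
      finally show "(\<Sum>b\<in>V. tn (b a) (c b (x * y))) = (\<Sum>b\<in>V. tn (b a) (c b x * y + x * c b y))" .
    next
      fix b assume bV: "b \<notin> V"
      have "b \<notin> W x" "b \<notin> W y" using V bV by auto
      then show "c b x * y + x * c b y = 0" by (simp add: cz)
    qed
  qed
  have cder: "c b \<in> derivations sS (*)" for b
    unfolding derivations_def
    by (auto intro!: linI simp: c_add c_scale c_mult vS.vector_space_axioms)
  have csum: "fam_summable B c"
    unfolding fam_summable_def
  proof
    fix s
    have "{b \<in> B. c b s \<noteq> 0} \<subseteq> W s" using cz by auto
    then show "finite {b \<in> B. c b s \<noteq> 0}" using finW by (auto intro: finite_subset)
  qed
  define Z where "Z = fam_sum B (\<lambda>b. tensor_op sT tn b (c b))"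
  have Zr: "Z \<in> right_tensor sT tn B (derivations sS (*))"
    unfolding right_tensor_def Z_def using cder csum by auto
  have bC: "b \<in> B \<Longrightarrow> b \<in> centroid sA mA" for b using B by auto
  have Tb: "tensor_op sT tn b (c b) (tn a s) = tn (b a) (c b s)" if "b \<in> B" for b a s
    using tensor_op(2)[OF cen_lin[OF bC[OF that]] der_lin[OF cder]] .
  have "d = Z"
  proof (rule lin_eq_T[OF dl der_lin[OF right_sub(1)[OF Zr B(2)]]])
    fix a s
    have supp: "{b \<in> B. tensor_op sT tn b (c b) (tn a s) \<noteq> 0} \<subseteq> W s"
    proof
      fix b assume "b \<in> {b \<in> B. tensor_op sT tn b (c b) (tn a s) \<noteq> 0}"
      then have nz: "tn (b a) (c b s) \<noteq> 0" using Tb by auto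
      show "b \<in> W s"
      proof (rule ccontr)
        assume "b \<notin> W s"
        then have "c b s = 0" by (rule cz)
        with nz show False by simp
      qed
    qed
    have "Z (tn a s) = (\<Sum>b\<in>W s. tensor_op sT tn b (c b) (tn a s))"
      unfolding Z_def by (rule fam_sum_eq[where F="\<lambda>b. tensor_op sT tn b (c b)", OF finW supp WB])
    also have "\<dots> = (\<Sum>b\<in>W s. tn (b a) (c b s))" using WB[of s] by (intro sum.cong) (auto intro!: Tb)
    also have "\<dots> = d (tn a s)" using KF[OF finW[of s], of s a] by simp
    finally show "d (tn a s) = Z (tn a s)" by simp
  qed
  moreover have "d \<in> plain_tensor sT tn (centroid sA mA) (derivations sS (*))"
    if fin: "finite {b\<in>B. c b \<noteq> 0}"
  proof -
    let ?B0 = "{b\<in>B. c b \<noteq> 0}"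
    have "Z = (\<Sum>b\<in>?B0. tensor_op sT tn b (c b))"
    proof
      fix v
      have z: "tensor_op sT tn b (c b) = (\<lambda>_. 0)" if "b \<in> B" "c b = (\<lambda>_. 0)" for b
        using tensor_op_zero[OF cen_lin[OF bC[OF that(1)]]] that(2) by simp
      have supp: "{b \<in> B. tensor_op sT tn b (c b) v \<noteq> 0} \<subseteq> ?B0"
        using z by (auto simp: fun_eq_iff)
      show "Z v = (\<Sum>b\<in>?B0. tensor_op sT tn b (c b)) v"
        unfolding Z_def sum_fun_apply
        by (rule fam_sum_eq[where F="\<lambda>b. tensor_op sT tn b (c b)", OF fin supp]) auto
    qed
    also have "\<dots> \<in> plain_tensor sT tn (centroid sA mA) (derivations sS (*))"
      unfolding plain_tensor_def
      by (rule fT.span_sum, rule fT.span_base) (use bC cder in blast)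
    finally show ?thesis using \<open>d = Z\<close> by simp
  qed
  ultimately show ?thesis using cder csum unfolding Z_def by blast
qed

end

context TT begin

lemma core_left_ex:
  assumes d: "d \<in> derivations sT mT"
  shows "\<exists>Y f. (\<forall>j. f j \<in> derivations sA mA) \<and> fam_summable JB f \<and>
    Y \<in> left_tensor sT tn (derivations sA mA) (range (\<lambda>s. (*) s)) \<and> (\<forall>a. Y (tn a 1) = d (tn a 1)) \<and>
    (finite {j\<in>JB. f j \<noteq> 0} \<longrightarrow> Y \<in> plain_tensor sT tn (derivations sA mA) (range (\<lambda>s. (*) s)))"
proof -
  note L = core_left[OF d]
  show ?thesis
    apply (rule exI, rule exI)
    apply (intro conjI allI impI)
        apply (rule L(1)[rule_format])
       apply (rule L(2))
      apply (rule L(3))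
     apply (rule L(4))
    apply (erule L(5))
    done
qed

lemma decomp_exists:
  assumes B: "fA.independent B" "B \<subseteq> centroid sA mA" and ct: "CTexp B"
    and d: "d \<in> derivations sT mT"
  shows "\<exists>Y Z f c. d = Y + Z \<and> Y \<in> left_tensor sT tn (derivations sA mA) (range (\<lambda>s. (*) s)) \<and>
     Z \<in> right_tensor sT tn B (derivations sS (*)) \<and>
     (\<forall>j. f j \<in> derivations sA mA) \<and> fam_summable JB f \<and>
     (\<forall>b. c b \<in> derivations sS (*)) \<and> fam_summable B c \<and>
     (finite {j\<in>JB. f j \<noteq> 0} \<longrightarrow> Y \<in> plain_tensor sT tn (derivations sA mA) (range (\<lambda>s. (*) s))) \<and>
     (finite {b\<in>B. c b \<noteq> 0} \<longrightarrow> Z \<in> plain_tensor sT tn (centroid sA mA) (derivations sS (*)))"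
proof -
  obtain Y f where Yf: "\<forall>j. f j \<in> derivations sA mA" "fam_summable JB f"
    "Y \<in> left_tensor sT tn (derivations sA mA) (range (\<lambda>s. (*) s))" "\<forall>a. Y (tn a 1) = d (tn a 1)"
    "finite {j\<in>JB. f j \<noteq> 0} \<longrightarrow> Y \<in> plain_tensor sT tn (derivations sA mA) (range (\<lambda>s. (*) s))"
    using core_left_ex[OF d] by (elim exE conjE)
  define d' where "d' = (\<lambda>x. d x - Y x)"
  have d'D: "d' \<in> derivations sT mT" unfolding d'_def by (rule der_diff[OF d left_sub(1)[OF Yf(3)]])
  have d'0: "d' (tn a 1) = 0" for a unfolding d'_def using Yf(4) by simp
  obtain c where c: "\<forall>b. c b \<in> derivations sS (*)" "fam_summable B c"
     "d' = fam_sum B (\<lambda>b. tensor_op sT tn b (c b))"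
     "finite {b\<in>B. c b \<noteq> 0} \<longrightarrow> d' \<in> plain_tensor sT tn (centroid sA mA) (derivations sS (*))"
    using core_right[OF B ct d'D d'0] by (elim exE conjE)
  have Zr: "d' \<in> right_tensor sT tn B (derivations sS (*))"
    unfolding right_tensor_def c(3) using c(1,2) by auto
  have eq: "d = Y + d'" unfolding d'_def by (simp add: fun_eq_iff)
  show ?thesis
    apply (rule exI[of _ Y], rule exI[of _ d'], rule exI[of _ f], rule exI[of _ c])
    using eq Yf c Zr by blast
qed

lemma star_CT:
  assumes B: "fA.independent B" "B \<subseteq> centroid sA mA" and ct: "CTexp B"
  shows "direct_sum_decomp (derivations sT mT)
          (left_tensor sT tn (derivations sA mA) (range (\<lambda>s. (*) s)))
          (right_tensor sT tn B (derivations sS (*)))"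
  unfolding direct_sum_decomp_def
proof (intro conjI)
  show "derivations sT mT = {y + z |y z. y \<in> left_tensor sT tn (derivations sA mA) (range (\<lambda>s. (*) s)) \<and>
      z \<in> right_tensor sT tn B (derivations sS (*))}"
  proof (intro equalityI subsetI)
    fix d assume "d \<in> derivations sT mT"
    from decomp_exists[OF B ct this] obtain Y Z where "d = Y + Z"
      "Y \<in> left_tensor sT tn (derivations sA mA) (range (\<lambda>s. (*) s))"
      "Z \<in> right_tensor sT tn B (derivations sS (*))" by blast
    then show "d \<in> {y + z |y z. y \<in> left_tensor sT tn (derivations sA mA) (range (\<lambda>s. (*) s)) \<and>
      z \<in> right_tensor sT tn B (derivations sS (*))}" by blast
  next
    fix x assume "x \<in> {y + z |y z. y \<in> left_tensor sT tn (derivations sA mA) (range (\<lambda>s. (*) s)) \<and>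
      z \<in> right_tensor sT tn B (derivations sS (*))}"
    then obtain y z where x: "x = y + z" and y: "y \<in> left_tensor sT tn (derivations sA mA) (range (\<lambda>s. (*) s))"
      and z: "z \<in> right_tensor sT tn B (derivations sS (*))" by blast
    have "(\<lambda>t. y t + z t) \<in> derivations sT mT"
      by (rule der_add[OF left_sub(1)[OF y] right_sub(1)[OF z B(2)]])
    then show "x \<in> derivations sT mT" unfolding x plus_fun_def .
  qed
  show "left_tensor sT tn (derivations sA mA) (range (\<lambda>s. (*) s)) \<inter> right_tensor sT tn B (derivations sS (*)) = {0}"
  proof (intro equalityI subsetI)
    fix Q :: "'t \<Rightarrow> 't" assume Q: "Q \<in> left_tensor sT tn (derivations sA mA) (range (\<lambda>s. (*) s)) \<inter> right_tensor sT tn B (derivations sS (*))"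
    then have "Q = (\<lambda>_. 0)"
      by (intro kill der_lin[OF left_sub(1)]) (auto intro: left_sub(2) right_sub(2)[OF _ B(2)])
    then show "Q \<in> {0}" by (simp add: zero_fun_def)
  next
    fix Q :: "'t \<Rightarrow> 't" assume "Q \<in> {0}"
    then show "Q \<in> left_tensor sT tn (derivations sA mA) (range (\<lambda>s. (*) s)) \<inter> right_tensor sT tn B (derivations sS (*))"
      using zero_left zero_right[OF B(2)] by auto
  qed
qed

lemma derT_subspace: "fT.subspace (derivations sT mT)"
  unfolding fT.subspace_def
proof (intro conjI ballI allI)
  show "0 \<in> derivations sT mT"
    unfolding derivations_def zero_fun_def by (auto intro!: zero_lin simp: vT.vector_space_axioms)
  fix x y assume "x \<in> derivations sT mT" "y \<in> derivations sT mT"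
  then show "x + y \<in> derivations sT mT" unfolding plus_fun_def by (rule der_add)
next
  fix c x assume x: "x \<in> derivations sT mT"
  have "(\<lambda>t. sT c (x t)) \<in> derivations sT mT"
    using x unfolding derivations_def
    by (auto intro!: linI simp: linD vT.vector_space_axioms mT_scale1 mT_scale2 vT.scale_right_distrib)
  then show "fscale sT c x \<in> derivations sT mT" unfolding fscale_def .
qed

lemma plain_left_props:
  assumes "X \<in> plain_tensor sT tn (derivations sA mA) (range (\<lambda>s. (*) s))"
  shows "X \<in> derivations sT mT" "\<And>s t. X (R s t) = R s (X t)"
proof -
  have gen: "{tensor_op sT tn f g | f g. f \<in> derivations sA mA \<and> g \<in> range (\<lambda>s. (*) s)} \<subseteq> derivations sT mT"
    using der_left by auto
  show "X \<in> derivations sT mT"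
    using fT.span_minimal[OF gen derT_subspace] assms unfolding plain_tensor_def by auto
  have "\<forall>s t. X (R s t) = R s (X t)"
    using assms unfolding plain_tensor_def
  proof (induction rule: fT.span_induct)
    case base
    show ?case unfolding fT.subspace_def
      by (auto simp: linD[OF R_lin] fscale_def)
  next
    case (step x)
    then obtain f s where x: "x = tensor_op sT tn f ((*) s)" and f: "f \<in> derivations sA mA" by auto
    then show ?case using comm_gen[OF der_lin[OF f]] by auto
  qed
  then show "X (R s t) = R s (X t)" for s t by auto
qed

lemma plain_right_props:
  assumes "X \<in> plain_tensor sT tn (centroid sA mA) (derivations sS (*))"
  shows "X \<in> derivations sT mT" "\<And>a. X (tn a 1) = 0"
proof -
  have gen: "{tensor_op sT tn f g | f g. f \<in> centroid sA mA \<and> g \<in> derivations sS (*)} \<subseteq> derivations sT mT"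
    using der_right by auto
  show "X \<in> derivations sT mT"
    using fT.span_minimal[OF gen derT_subspace] assms unfolding plain_tensor_def by auto
  have "\<forall>a. X (tn a 1) = 0"
    using assms unfolding plain_tensor_def
  proof (induction rule: fT.span_induct)
    case base
    show ?case unfolding fT.subspace_def by (auto simp: fscale_def)
  next
    case (step x)
    then obtain f g where x: "x = tensor_op sT tn f g" and f: "f \<in> centroid sA mA" and g: "g \<in> derivations sS (*)" by auto
    then show ?case using tensor_op(2)[OF cen_lin[OF f] der_lin[OF g]] derS_one[OF g] by auto
  qed
  then show "X (tn a 1) = 0" for a by auto
qed

lemma plain_CT:
  assumes B: "fA.independent B" "B \<subseteq> centroid sA mA" and ct: "CTexp B"
    and HL: "\<And>f. (\<forall>j. f j \<in> derivations sA mA) \<Longrightarrow> fam_summable JB f \<Longrightarrow> finite {j\<in>JB. f j \<noteq> 0}"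
    and HR: "\<And>c. (\<forall>b. c b \<in> derivations sS (*)) \<Longrightarrow> fam_summable B c \<Longrightarrow> finite {b\<in>B. c b \<noteq> 0}"
  shows "plain_decomp sA mA sS sT tn mT"
  unfolding plain_decomp_def direct_sum_decomp_def
proof (intro conjI)
  let ?L = "plain_tensor sT tn (derivations sA mA) (range (\<lambda>s. (*) s))"
  let ?R = "plain_tensor sT tn (centroid sA mA) (derivations sS (*))"
  show "derivations sT mT = {y + z |y z. y \<in> ?L \<and> z \<in> ?R}"
  proof (intro equalityI subsetI)
    fix d assume "d \<in> derivations sT mT"
    from decomp_exists[OF B ct this] obtain Y Z f c where "d = Y + Z"
      "\<forall>j. f j \<in> derivations sA mA" "fam_summable JB f" "\<forall>b. c b \<in> derivations sS (*)" "fam_summable B c"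
      "finite {j\<in>JB. f j \<noteq> 0} \<longrightarrow> Y \<in> ?L" "finite {b\<in>B. c b \<noteq> 0} \<longrightarrow> Z \<in> ?R"
      by blast
    then show "d \<in> {y + z |y z. y \<in> ?L \<and> z \<in> ?R}" using HL HR by blast
  next
    fix x assume "x \<in> {y + z |y z. y \<in> ?L \<and> z \<in> ?R}"
    then obtain y z where x: "x = y + z" and y: "y \<in> ?L" and z: "z \<in> ?R" by blast
    have "(\<lambda>t. y t + z t) \<in> derivations sT mT"
      by (rule der_add[OF plain_left_props(1)[OF y] plain_right_props(1)[OF z]])
    then show "x \<in> derivations sT mT" unfolding x plus_fun_def .
  qed
  show "?L \<inter> ?R = {0}"
  proof (intro equalityI subsetI)
    fix Q :: "'t \<Rightarrow> 't" assume Q: "Q \<in> ?L \<inter> ?R"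
    then have "Q = (\<lambda>_. 0)"
      by (intro kill der_lin[OF plain_left_props(1)]) (auto intro: plain_left_props(2) plain_right_props(2))
    then show "Q \<in> {0}" by (simp add: zero_fun_def)
  next
    fix Q :: "'t \<Rightarrow> 't" assume "Q \<in> {0}"
    then show "Q \<in> ?L \<inter> ?R" unfolding plain_tensor_def using fT.span_zero by auto
  qed
qed

end

context TT begin

lemma cen_subspace: "fA.subspace (centroid sA mA)"
  unfolding fA.subspace_def
proof (intro conjI ballI allI)
  show "0 \<in> centroid sA mA"
    unfolding centroid_def zero_fun_def by (auto intro!: zero_lin simp: vA.vector_space_axioms)
  fix x y assume x: "x \<in> centroid sA mA" and y: "y \<in> centroid sA mA"
  have lin: "Vector_Spaces.linear sA sA (\<lambda>v. x v + y v)"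
    by (rule linI) (auto simp: linD[OF cen_lin[OF x]] linD[OF cen_lin[OF y]] vA.vector_space_axioms
        vA.scale_right_distrib)
  have "x (mA a b) + y (mA a b) = mA (x a + y a) b" for a b
    by (simp add: cen_mult(1)[OF x] cen_mult(1)[OF y] mA_add1)
  moreover have "x (mA a b) + y (mA a b) = mA a (x b + y b)" for a b
    using cen_mult(2)[OF x, of a b] cen_mult(2)[OF y, of a b] by (simp add: mA_add2)
  ultimately show "x + y \<in> centroid sA mA"
    using lin unfolding centroid_def plus_fun_def by auto
next
  fix c x assume x: "x \<in> centroid sA mA"
  have lin: "Vector_Spaces.linear sA sA (\<lambda>v. sA c (x v))"
    by (rule linI) (auto simp: linD[OF cen_lin[OF x]] vA.vector_space_axioms
        vA.scale_right_distrib mult.commute)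
  have "sA c (x (mA a b)) = mA (sA c (x a)) b" for a b
    by (simp add: cen_mult(1)[OF x] mA_scale1)
  moreover have "sA c (x (mA a b)) = mA a (sA c (x b))" for a b
    using cen_mult(2)[OF x, of a b] by (simp add: mA_scale2)
  ultimately show "fscale sA c x \<in> centroid sA mA"
    using lin unfolding centroid_def fscale_def by auto
qed

lemma fscale_sum_apply: "(\<Sum>b\<in>W. fscale sA (r b) b) a = (\<Sum>b\<in>W. sA (r b) (b a))"
  by (simp add: sum_fun_apply fscale_def)

lemma span_B_expand:
  assumes B: "fA.independent B" and g: "g \<in> fA.span B"
  obtains W r where "finite W" "W \<subseteq> B" "\<And>a. g a = (\<Sum>b\<in>W. sA (r b) (b a))"
proof -
  let ?r = "fA.representation B g"
  have geq: "g = (\<Sum>b | ?r b \<noteq> 0. fscale sA (?r b) b)"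
    using fA.sum_nonzero_representation_eq[OF B g] by simp
  have eq: "g a = (\<Sum>b | ?r b \<noteq> 0. sA (?r b) (b a))" for a
    by (subst geq, rule fscale_sum_apply)
  have fin: "finite {b. ?r b \<noteq> 0}" by (rule fA.finite_representation)
  have sub: "{b. ?r b \<noteq> 0} \<subseteq> B" using fA.representation_ne_zero by auto
  show ?thesis by (rule that[OF fin sub eq])
qed

lemma CT_fin:
  assumes B: "fA.independent B" "fA.span B = centroid sA mA"
    and Fin: "finite JB \<or> (\<exists>G. finite G \<and> (\<forall>\<gamma>\<in>centroid sA mA. (\<forall>g\<in>G. \<gamma> g = 0) \<longrightarrow> \<gamma> = (\<lambda>_. 0)))"
  shows "CTexp B"
  unfolding CTexp_def
proof
  fix \<chi> assume \<chi>: "\<chi> \<in> centroid sT mT"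
  note cl = cen_lin[OF \<chi>]
  define \<gamma> where "\<gamma> j a = coord (\<chi> (tn a 1)) j" for j a
  have \<gamma>C: "\<gamma> j \<in> centroid sA mA" for j
  proof -
    have lin: "Vector_Spaces.linear sA sA (\<gamma> j)"
      by (rule linI) (auto simp: \<gamma>_def tn_add1 tn_scale1 linD[OF cl] coord_add coord_scale
          vA.vector_space_axioms)
    have e: "tn (mA a b) 1 = mT (tn a 1) (tn b 1)" for a b by (simp add: T_mult')
    have 1: "\<gamma> j (mA a b) = mA (\<gamma> j a) b" for a b
      unfolding \<gamma>_def e by (simp only: cen_mult(1)[OF \<chi>] coord_mT_right)
    have 2: "\<gamma> j (mA a b) = mA a (\<gamma> j b)" for a b
      unfolding \<gamma>_def e by (simp only: cen_mult(2)[OF \<chi>] coord_mT_left)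
    from 1 2 show ?thesis using lin unfolding centroid_def by auto
  qed
  define F where "F = {j\<in>JB. \<gamma> j \<noteq> (\<lambda>_. 0)}"
  have finF: "finite F"
    using Fin
  proof
    assume "finite JB" then show ?thesis unfolding F_def by auto
  next
    assume "\<exists>G. finite G \<and> (\<forall>\<gamma>\<in>centroid sA mA. (\<forall>g\<in>G. \<gamma> g = 0) \<longrightarrow> \<gamma> = (\<lambda>_. 0))"
    then obtain G where G: "finite G" "\<And>\<gamma>. \<gamma> \<in> centroid sA mA \<Longrightarrow> (\<forall>g\<in>G. \<gamma> g = 0) \<Longrightarrow> \<gamma> = (\<lambda>_. 0)"
      by blast
    have "F \<subseteq> (\<Union>g\<in>G. {j. \<gamma> j g \<noteq> 0})" unfolding F_def using G(2)[OF \<gamma>C] by blast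
    moreover have "finite (\<Union>g\<in>G. {j. \<gamma> j g \<noteq> 0})" using G(1) by (auto simp: \<gamma>_def coord_finite)
    ultimately show ?thesis by (rule finite_subset)
  qed
  have FJ: "F \<subseteq> JB" unfolding F_def by auto
  have form: "\<chi> (tn a t) = (\<Sum>j\<in>F. tn (\<gamma> j a) (j * t))" for a t
  proof (induction a rule: A_induct)
    case (1 a1 a2)
    have supp: "{j. coord (\<chi> (tn a1 1)) j \<noteq> 0} \<subseteq> F"
      unfolding F_def \<gamma>_def using coord_JB by (auto simp: fun_eq_iff)
    have "\<chi> (tn (mA a1 a2) t) = \<chi> (mT (tn a1 1) (tn a2 t))" by (simp add: T_mult')
    also have "\<dots> = mT (\<chi> (tn a1 1)) (tn a2 t)" by (rule cen_mult(1)[OF \<chi>])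
    also have "\<dots> = mT (\<Sum>j\<in>F. tn (\<gamma> j a1) j) (tn a2 t)"
      using coord_expandU[OF finF supp] unfolding \<gamma>_def by simp
    also have "\<dots> = (\<Sum>j\<in>F. tn (\<gamma> j (mA a1 a2)) (j * t))"
      by (simp add: mT_sum1 T_mult' cen_mult(1)[OF \<gamma>C])
    finally show ?case .
  next
    case 2 then show ?case by (simp add: linD[OF cl] linD[OF cen_lin[OF \<gamma>C]])
  next
    case (3 x y) then show ?case by (simp add: linD[OF cl] linD[OF cen_lin[OF \<gamma>C]] tn_add1 sum.distrib)
  next
    case (4 c x) then show ?case
      by (simp add: linD[OF cl] linD[OF cen_lin[OF \<gamma>C]] tn_scale1 vT.scale_sum_right)
  qed
  have "\<forall>j. \<exists>p. finite (fst p) \<and> fst p \<subseteq> B \<and> (\<forall>a. \<gamma> j a = (\<Sum>b\<in>fst p. sA (snd p b) (b a)))"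
  proof
    fix j
    have "\<gamma> j \<in> fA.span B" using \<gamma>C B(2) by auto
    then obtain W r where "finite W" "W \<subseteq> B" "\<And>a. \<gamma> j a = (\<Sum>b\<in>W. sA (r b) (b a))"
      by (rule span_B_expand[OF B(1)]) blast
    then show "\<exists>p. finite (fst p) \<and> fst p \<subseteq> B \<and> (\<forall>a. \<gamma> j a = (\<Sum>b\<in>fst p. sA (snd p b) (b a)))"
      by (intro exI[of _ "(W, r)"]) auto
  qed
  then have "\<exists>P. \<forall>j. finite (fst (P j)) \<and> fst (P j) \<subseteq> B \<and> (\<forall>a. \<gamma> j a = (\<Sum>b\<in>fst (P j). sA (snd (P j) b) (b a)))"
    by (rule choice)
  then obtain P where P: "\<forall>j. finite (fst (P j)) \<and> fst (P j) \<subseteq> B \<and> (\<forall>a. \<gamma> j a = (\<Sum>b\<in>fst (P j). sA (snd (P j) b) (b a)))"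
    by blast
  define Wj where "Wj j = fst (P j)" for j
  define \<rho> where "\<rho> j b = (if b \<in> Wj j then snd (P j) b else 0)" for j b
  define W where "W = (\<Union>j\<in>F. Wj j)"
  have finW: "finite W" unfolding W_def Wj_def using finF P by auto
  have WB: "W \<subseteq> B" unfolding W_def Wj_def using P by auto
  have gexp: "\<gamma> j a = (\<Sum>b\<in>W. sA (\<rho> j b) (b a))" if "j \<in> F" for j a
  proof -
    have "\<gamma> j a = (\<Sum>b\<in>Wj j. sA (snd (P j) b) (b a))" using P unfolding Wj_def by auto
    also have "\<dots> = (\<Sum>b\<in>Wj j. sA (\<rho> j b) (b a))" by (rule sum.cong) (auto simp: \<rho>_def)
    also have "\<dots> = (\<Sum>b\<in>W. sA (\<rho> j b) (b a))"
      by (rule sum_ext0) (use finW that in \<open>auto simp: W_def \<rho>_def\<close>)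
    finally show ?thesis .
  qed
  define \<sigma> where "\<sigma> b = (\<Sum>j\<in>F. sS (\<rho> j b) j)" for b
  have fin_eq: "\<chi> (tn a t) = (\<Sum>b\<in>W. tn (b a) (\<sigma> b * t))" for a t
  proof -
    have "\<chi> (tn a t) = (\<Sum>j\<in>F. tn (\<Sum>b\<in>W. sA (\<rho> j b) (b a)) (j * t))"
      unfolding form by (rule sum.cong) (auto simp: gexp)
    also have "\<dots> = (\<Sum>j\<in>F. \<Sum>b\<in>W. tn (b a) (sS (\<rho> j b) j * t))"
      by (simp add: tn_sum1 tn_scale12 S_alg')
    also have "\<dots> = (\<Sum>b\<in>W. \<Sum>j\<in>F. tn (b a) (sS (\<rho> j b) j * t))"
      by (rule sum.swap)
    also have "\<dots> = (\<Sum>b\<in>W. tn (b a) (\<sigma> b * t))"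
      by (simp add: \<sigma>_def tn_sum2 sum_distrib_right)
    finally show ?thesis .
  qed
  show "\<exists>W \<sigma>. finite W \<and> W \<subseteq> B \<and> (\<forall>a t. \<chi> (tn a t) = (\<Sum>b\<in>W. tn (b a) (\<sigma> b * t)))"
    by (rule exI[of _ W], rule exI[of _ \<sigma>]) (intro conjI finW WB allI fin_eq)
qed

end

lemma lin_zero_span: "Vector_Spaces.linear s1 s2 f \<Longrightarrow> (\<And>g. g \<in> G \<Longrightarrow> f g = 0) \<Longrightarrow>
  x \<in> module.span s1 G \<Longrightarrow> f x = 0"
  by (rule module_hom.eq_0_on_span[OF module_hom_linearI])

context TT begin

definition "FinC \<longleftrightarrow> (\<exists>G. finite G \<and> (\<forall>\<gamma>\<in>centroid sA mA. (\<forall>g\<in>G. \<gamma> g = 0) \<longrightarrow> \<gamma> = (\<lambda>_. 0)))"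
definition "FinD \<longleftrightarrow> (\<exists>G. finite G \<and> (\<forall>\<delta>\<in>derivations sA mA. (\<forall>g\<in>G. \<delta> g = 0) \<longrightarrow> \<delta> = (\<lambda>_. 0)))"
definition "FinDS \<longleftrightarrow> (\<exists>G. finite G \<and> (\<forall>\<delta>\<in>derivations sS (*). (\<forall>g\<in>G. \<delta> g = 0) \<longrightarrow> \<delta> = (\<lambda>_. 0)))"

lemma FinC_fd: "finite_dim sA \<Longrightarrow> FinC"
  unfolding FinC_def finite_dim_def
  by (metis (no_types, lifting) UNIV_I cen_lin lin_zero_span)

lemma FinD_fd: "finite_dim sA \<Longrightarrow> FinD"
  unfolding FinD_def finite_dim_def
  by (metis (no_types, lifting) UNIV_I der_lin lin_zero_span)

lemma FinDS_fd: "finite_dim sS \<Longrightarrow> FinDS"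
  unfolding FinDS_def finite_dim_def
  by (metis (no_types, lifting) UNIV_I der_lin lin_zero_span)

lemma kernel_subspace: "Vector_Spaces.linear s1 s2 f \<Longrightarrow> module.subspace s1 {x. f x = 0}"
  by (rule module_hom.subspace_kernel[OF module_hom_linearI])

lemma FinC_fg: assumes "alg_fin_gen sA mA" shows "FinC"
proof -
  obtain G where G: "finite G" and U: "\<forall>U. vA.subspace U \<and> G \<subseteq> U \<and> (\<forall>x\<in>U. \<forall>y\<in>U. mA x y \<in> U) \<longrightarrow> U = UNIV"
    using assms unfolding alg_fin_gen_def by blast
  show ?thesis unfolding FinC_def
  proof (intro exI[of _ G] conjI ballI impI G)
  fix \<gamma> assume \<gamma>: "\<gamma> \<in> centroid sA mA" and z: "\<forall>g\<in>G. \<gamma> g = 0"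
  have "{x. \<gamma> x = 0} = UNIV"
    using U kernel_subspace[OF cen_lin[OF \<gamma>]] z cen_mult(1)[OF \<gamma>] by auto
  then show "\<gamma> = (\<lambda>_. 0)" by auto
  qed
qed

lemma FinD_fg: assumes "alg_fin_gen sA mA" shows "FinD"
proof -
  obtain G where G: "finite G" and U: "\<forall>U. vA.subspace U \<and> G \<subseteq> U \<and> (\<forall>x\<in>U. \<forall>y\<in>U. mA x y \<in> U) \<longrightarrow> U = UNIV"
    using assms unfolding alg_fin_gen_def by blast
  show ?thesis unfolding FinD_def
  proof (intro exI[of _ G] conjI ballI impI G)
  fix \<delta> assume \<delta>: "\<delta> \<in> derivations sA mA" and z: "\<forall>g\<in>G. \<delta> g = 0"
  have "{x. \<delta> x = 0} = UNIV"
    using U kernel_subspace[OF der_lin[OF \<delta>]] z der_mult[OF \<delta>] by auto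
  then show "\<delta> = (\<lambda>_. 0)" by auto
  qed
qed

lemma FinDS_fg: assumes "alg_fin_gen sS (*)" shows "FinDS"
proof -
  obtain G where G: "finite G" and U: "\<forall>U. vS.subspace U \<and> G \<subseteq> U \<and> (\<forall>x\<in>U. \<forall>y\<in>U. x * y \<in> U) \<longrightarrow> U = UNIV"
    using assms unfolding alg_fin_gen_def by blast
  show ?thesis unfolding FinDS_def
  proof (intro exI[of _ G] conjI ballI impI G)
  fix \<delta> assume \<delta>: "\<delta> \<in> derivations sS (*)" and z: "\<forall>g\<in>G. \<delta> g = 0"
  have "{x. \<delta> x = 0} = UNIV"
    using U kernel_subspace[OF der_lin[OF \<delta>]] z der_mult[OF \<delta>] by auto
  then show "\<delta> = (\<lambda>_. 0)" by auto
  qed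
qed

lemma FinC_unital: "unital_alg mA \<Longrightarrow> FinC"
  unfolding FinC_def unital_alg_def
proof (elim exE, intro exI conjI ballI impI)
  fix e \<gamma> assume e: "\<forall>x. mA e x = x \<and> mA x e = x" and \<gamma>: "\<gamma> \<in> centroid sA mA" and z: "\<forall>g\<in>{e}. \<gamma> g = 0"
  show "\<gamma> = (\<lambda>_. 0)"
  proof
    fix x
    have "\<gamma> x = \<gamma> (mA e x)" using e by simp
    also have "\<dots> = mA (\<gamma> e) x" by (rule cen_mult(1)[OF \<gamma>])
    finally show "\<gamma> x = 0" using z by simp
  qed
qed simp

lemma cen_comm:
  assumes g: "\<gamma> \<in> centroid sA mA" and d: "\<delta> \<in> centroid sA mA"
  shows "\<gamma> (\<delta> x) = \<delta> (\<gamma> x)"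
proof (induction x rule: A_induct)
  case (1 a b)
  have "\<gamma> (\<delta> (mA a b)) = \<gamma> (mA (\<delta> a) b)" by (simp add: cen_mult(1)[OF d])
  also have "\<dots> = mA (\<delta> a) (\<gamma> b)" by (rule cen_mult(2)[OF g])
  also have "\<dots> = \<delta> (mA a (\<gamma> b))" by (rule cen_mult(1)[OF d, symmetric])
  also have "\<dots> = \<delta> (\<gamma> (mA a b))" by (simp add: cen_mult(2)[OF g])
  finally show ?case .
qed (simp_all add: linD[OF cen_lin[OF g]] linD[OF cen_lin[OF d]])

lemma Fin_mod:
  assumes M: "fin_gen_module M" "M \<subseteq> centroid sA mA"
    and comm: "\<And>\<theta> \<gamma> x. \<theta> \<in> E \<Longrightarrow> \<gamma> \<in> M \<Longrightarrow> \<theta> (\<gamma> x) = \<gamma> (\<theta> x)"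
    and Elin: "\<And>\<theta>. \<theta> \<in> E \<Longrightarrow> Vector_Spaces.linear sA sA \<theta>"
  shows "\<exists>G. finite G \<and> (\<forall>\<theta>\<in>E. (\<forall>g\<in>G. \<theta> g = 0) \<longrightarrow> \<theta> = (\<lambda>_. 0))"
proof -
  obtain G where G: "finite G" "\<And>x. \<exists>\<gamma>. (\<forall>g\<in>G. \<gamma> g \<in> M) \<and> x = (\<Sum>g\<in>G. \<gamma> g g)"
    using M(1) unfolding fin_gen_module_def by blast
  show ?thesis
  proof (intro exI conjI ballI impI)
    fix \<theta> assume \<theta>: "\<theta> \<in> E" and z: "\<forall>g\<in>G. \<theta> g = 0"
    show "\<theta> = (\<lambda>_. 0)"
    proof
      fix x
      obtain \<gamma> where \<gamma>: "\<forall>g\<in>G. \<gamma> g \<in> M" "x = (\<Sum>g\<in>G. \<gamma> g g)" using G(2) by blast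
      have "\<theta> (\<gamma> g g) = 0" if "g \<in> G" for g
      proof -
        have gM: "\<gamma> g \<in> M" using \<gamma>(1) that by blast
        have "\<theta> (\<gamma> g g) = \<gamma> g (\<theta> g)" by (rule comm[OF \<theta> gM])
        also have "\<dots> = 0" using z that linD(3)[OF cen_lin[of "\<gamma> g"]] gM M(2) by auto
        finally show ?thesis .
      qed
      then show "\<theta> x = 0" using \<gamma>(2) by (simp add: linD(4)[OF Elin[OF \<theta>]])
    qed
  qed (rule G(1))
qed

end

context TT begin

lemma sum_if_sub:
  assumes "finite V" "W \<subseteq> V"
  shows "(\<Sum>b\<in>V. tn (b a) ((if b \<in> W then \<sigma> b else 0) * t)) = (\<Sum>b\<in>W. tn (b a) (\<sigma> b * t))"
proof -
  have "(\<Sum>b\<in>V. tn (b a) ((if b \<in> W then \<sigma> b else 0) * t)) = (\<Sum>b\<in>W. tn (b a) ((if b \<in> W then \<sigma> b else 0) * t))"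
    by (rule sum_ext0[symmetric]) (use assms in auto)
  also have "\<dots> = (\<Sum>b\<in>W. tn (b a) (\<sigma> b * t))" by (rule sum.cong) auto
  finally show ?thesis .
qed

definition "QB B X \<longleftrightarrow> (\<exists>W \<sigma>. finite W \<and> W \<subseteq> B \<and> (\<forall>a t. X (tn a t) = (\<Sum>b\<in>W. tn (b a) (\<sigma> b * t))))"

lemma QB_0: "QB B (\<lambda>_. 0)"
  unfolding QB_def by (rule exI[of _ "{}"]) auto

lemma QB_add:
  assumes "QB B X" "QB B Y" shows "QB B (\<lambda>v. X v + Y v)"
proof -
  obtain W1 \<sigma>1 where 1: "finite W1" "W1 \<subseteq> B" "\<forall>a t. X (tn a t) = (\<Sum>b\<in>W1. tn (b a) (\<sigma>1 b * t))"
    using assms(1) unfolding QB_def by blast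
  obtain W2 \<sigma>2 where 2: "finite W2" "W2 \<subseteq> B" "\<forall>a t. Y (tn a t) = (\<Sum>b\<in>W2. tn (b a) (\<sigma>2 b * t))"
    using assms(2) unfolding QB_def by blast
  define \<sigma> where "\<sigma> b = (if b \<in> W1 then \<sigma>1 b else 0) + (if b \<in> W2 then \<sigma>2 b else 0)" for b
  have fin: "finite (W1 \<union> W2)" using 1 2 by auto
  have "X (tn a t) + Y (tn a t) = (\<Sum>b\<in>W1 \<union> W2. tn (b a) (\<sigma> b * t))" for a t
  proof -
    have "(\<Sum>b\<in>W1 \<union> W2. tn (b a) (\<sigma> b * t)) =
      (\<Sum>b\<in>W1 \<union> W2. tn (b a) ((if b \<in> W1 then \<sigma>1 b else 0) * t)) +
      (\<Sum>b\<in>W1 \<union> W2. tn (b a) ((if b \<in> W2 then \<sigma>2 b else 0) * t))"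
      unfolding \<sigma>_def by (simp only: distrib_right tn_add2 sum.distrib)
    also have "\<dots> = X (tn a t) + Y (tn a t)"
      using 1(3) 2(3) sum_if_sub[OF fin, of W1 a \<sigma>1 t] sum_if_sub[OF fin, of W2 a \<sigma>2 t] by auto
    finally show ?thesis by simp
  qed
  then show ?thesis unfolding QB_def
    by (intro exI[of _ "W1 \<union> W2"] exI[of _ \<sigma>]) (use 1 2 in auto)
qed

lemma QB_scale:
  assumes "QB B X" shows "QB B (\<lambda>v. sT r (X v))"
proof -
  obtain W \<sigma> where 1: "finite W" "W \<subseteq> B" "\<forall>a t. X (tn a t) = (\<Sum>b\<in>W. tn (b a) (\<sigma> b * t))"
    using assms(1) unfolding QB_def by blast
  have "sT r (X (tn a t)) = (\<Sum>b\<in>W. tn (b a) (sS r (\<sigma> b) * t))" for a t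
    using 1(3) by (simp add: vT.scale_sum_right tn_scale2[symmetric] S_alg')
  then show ?thesis unfolding QB_def
    by (intro exI[of _ W] exI[of _ "\<lambda>b. sS r (\<sigma> b)"]) (use 1 in auto)
qed

lemma CT_psi:
  fixes sC :: "'k \<Rightarrow> 'c::ab_group_add \<Rightarrow> 'c" and tc :: "('a \<Rightarrow> 'a) \<Rightarrow> 's \<Rightarrow> 'c"
    and \<psi> :: "'c \<Rightarrow> ('t \<Rightarrow> 't)"
  assumes TP: "is_tensor_product (fscale sA) (centroid sA mA) sS sC tc"
    and lin: "Vector_Spaces.linear sC (fscale sT) \<psi>"
    and gen: "\<forall>\<gamma> \<in> centroid sA mA. \<forall>s. \<psi> (tc \<gamma> s) = tensor_op sT tn \<gamma> ((*) s)"
    and bij: "bij_betw \<psi> UNIV (centroid sT mT)"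
    and B: "fA.independent B" "fA.span B = centroid sA mA"
  shows "CTexp B"
proof -
  have vC: "vector_space sC" and sp: "module.span sC ((\<lambda>(a, w). tc a w) ` (centroid sA mA \<times> UNIV)) = UNIV"
    using TP unfolding is_tensor_product_def by auto
  have mC: "module sC" using vC by (simp add: module_iff_vector_space)
  have Qc: "QB B (\<psi> c)" for c
  proof -
    have "c \<in> module.span sC ((\<lambda>(a, w). tc a w) ` (centroid sA mA \<times> UNIV))" using sp by auto
    then show ?thesis
    proof (rule module.span_induct[OF mC, where P="\<lambda>c. QB B (\<psi> c)"])
      show "module.subspace sC {c. QB B (\<psi> c)}" unfolding module.subspace_def[OF mC]
      proof (intro conjI ballI allI)
        show "0 \<in> {c. QB B (\<psi> c)}" using QB_0 linD(3)[OF lin] by (simp add: zero_fun_def)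
        fix x y assume "x \<in> {c. QB B (\<psi> c)}" "y \<in> {c. QB B (\<psi> c)}"
        then show "x + y \<in> {c. QB B (\<psi> c)}"
          using QB_add linD(1)[OF lin] by (simp add: plus_fun_def)
      next
        fix r x assume "x \<in> {c. QB B (\<psi> c)}"
        then show "sC r x \<in> {c. QB B (\<psi> c)}"
          using QB_scale linD(2)[OF lin] by (simp add: fscale_def)
      qed
    next
      fix x assume "x \<in> (\<lambda>(a, w). tc a w) ` (centroid sA mA \<times> UNIV)"
      then obtain \<gamma> s where x: "x = tc \<gamma> s" and \<gamma>: "\<gamma> \<in> centroid sA mA" by auto
      have g: "\<gamma> \<in> fA.span B" using \<gamma> B(2) by auto
      obtain W r where W: "finite W" "W \<subseteq> B" "\<And>a. \<gamma> a = (\<Sum>b\<in>W. sA (r b) (b a))"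
        by (rule span_B_expand[OF B(1) g]) blast
      have "\<psi> x (tn a t) = (\<Sum>b\<in>W. tn (b a) (sS (r b) s * t))" for a t
      proof -
        have "\<psi> x (tn a t) = tn (\<gamma> a) (s * t)"
          using gen \<gamma> tensor_op(2)[OF cen_lin[OF \<gamma>] L_lin] by (simp add: x)
        also have "\<dots> = (\<Sum>b\<in>W. tn (b a) (sS (r b) s * t))"
          by (simp add: W(3) tn_sum1 tn_scale12 S_alg')
        finally show ?thesis .
      qed
      then show "QB B (\<psi> x)" unfolding QB_def
        by (intro exI[of _ W] exI[of _ "\<lambda>b. sS (r b) s"]) (use W in auto)
    qed
  qed
  show ?thesis unfolding CTexp_def
  proof
    fix \<chi> assume "\<chi> \<in> centroid sT mT"
    then obtain c where "\<chi> = \<psi> c" using bij unfolding bij_betw_def by auto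
    then show "\<exists>W \<sigma>. finite W \<and> W \<subseteq> B \<and> (\<forall>a t. \<chi> (tn a t) = (\<Sum>b\<in>W. tn (b a) (\<sigma> b * t)))"
      using Qc[of c] unfolding QB_def by simp
  qed
qed

lemma JB_fin: "finite_dim sS \<Longrightarrow> finite JB"
  unfolding finite_dim_def using vS.independent_span_bound[OF _ JB(1)] by auto

lemma B_fin_C: "finite_dim_subspace (fscale sA) (centroid sA mA) \<Longrightarrow> fA.independent B \<Longrightarrow>
  B \<subseteq> centroid sA mA \<Longrightarrow> finite B"
  unfolding finite_dim_subspace_def using fA.independent_span_bound by metis

lemma B_fin_A:
  assumes fd: "finite_dim sA" and B: "fA.independent B" "B \<subseteq> centroid sA mA"
  shows "finite B"
proof -
  obtain U where U: "finite U" "vA.span U = UNIV" using fd unfolding finite_dim_def by blast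
  have "\<exists>k. x = (\<Sum>u\<in>U. sA (k u) u)" for x using vA.span_finite[OF U(1)] U(2) by auto
  then obtain \<kappa> where \<kappa>: "\<And>x. x = (\<Sum>u\<in>U. sA (\<kappa> x u) u)" by metis
  define E where "E p = (\<lambda>x. sA (\<kappa> x (fst p)) (snd p))" for p
  have "f \<in> fA.span (E ` (U \<times> U))" if f: "f \<in> centroid sA mA" for f
  proof -
    note fl = cen_lin[OF f]
    have "f = (\<Sum>p\<in>U \<times> U. fscale sA (\<kappa> (f (fst p)) (snd p)) (E p))"
    proof
      fix x
      have "f x = f (\<Sum>u\<in>U. sA (\<kappa> x u) u)" using \<kappa>[of x] by simp
      also have "\<dots> = (\<Sum>u\<in>U. sA (\<kappa> x u) (f u))" by (simp add: linD[OF fl])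
      also have "\<dots> = (\<Sum>u\<in>U. sA (\<kappa> x u) (\<Sum>v\<in>U. sA (\<kappa> (f u) v) v))"
        by (rule sum.cong[OF refl]) (use \<kappa> in metis)
      also have "\<dots> = (\<Sum>u\<in>U. \<Sum>v\<in>U. sA (\<kappa> (f u) v) (sA (\<kappa> x u) v))"
        by (simp add: vA.scale_sum_right mult.commute)
      also have "\<dots> = (\<Sum>p\<in>U \<times> U. sA (\<kappa> (f (fst p)) (snd p)) (sA (\<kappa> x (fst p)) (snd p)))"
        by (simp add: sum.cartesian_product case_prod_beta)
      also have "\<dots> = (\<Sum>p\<in>U \<times> U. fscale sA (\<kappa> (f (fst p)) (snd p)) (E p)) x"
        by (simp add: sum_fun_apply fscale_def E_def)
      finally show "f x = (\<Sum>p\<in>U \<times> U. fscale sA (\<kappa> (f (fst p)) (snd p)) (E p)) x" .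
    qed
    also have "\<dots> \<in> fA.span (E ` (U \<times> U))"
      by (intro fA.span_sum fA.span_scale fA.span_base) auto
    finally show ?thesis .
  qed
  then have "B \<subseteq> fA.span (E ` (U \<times> U))" using B(2) by auto
  moreover have "finite (E ` (U \<times> U))" using U(1) by simp
  ultimately show ?thesis using fA.independent_span_bound[OF _ B(1)] by blast
qed

lemma HL_of:
  assumes "finite JB \<or> FinD" "\<forall>j. f j \<in> derivations sA mA" "fam_summable JB f"
  shows "finite {j\<in>JB. f j \<noteq> 0}"
  using assms(1)
proof
  assume "FinD"
  then obtain G where G: "finite G" "\<And>\<delta>. \<delta> \<in> derivations sA mA \<Longrightarrow> \<forall>g\<in>G. \<delta> g = 0 \<Longrightarrow> \<delta> = (\<lambda>_. 0)"
    unfolding FinD_def by blast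
  have "{j\<in>JB. f j \<noteq> 0} \<subseteq> (\<Union>g\<in>G. {j\<in>JB. f j g \<noteq> 0})"
    using G(2) assms(2) by (fastforce simp: zero_fun_def)
  moreover have "finite (\<Union>g\<in>G. {j\<in>JB. f j g \<noteq> 0})"
    using G(1) assms(3) unfolding fam_summable_def by auto
  ultimately show ?thesis by (rule finite_subset)
qed auto

lemma HR_of:
  assumes "finite B \<or> FinDS" "\<forall>b. c b \<in> derivations sS (*)" "fam_summable B c"
  shows "finite {b\<in>B. c b \<noteq> 0}"
  using assms(1)
proof
  assume "FinDS"
  then obtain G where G: "finite G" "\<And>\<delta>. \<delta> \<in> derivations sS (*) \<Longrightarrow> \<forall>g\<in>G. \<delta> g = 0 \<Longrightarrow> \<delta> = (\<lambda>_. 0)"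
    unfolding FinDS_def by blast
  have "{b\<in>B. c b \<noteq> 0} \<subseteq> (\<Union>g\<in>G. {b\<in>B. c b g \<noteq> 0})"
    using G(2) assms(2) by (fastforce simp: zero_fun_def)
  moreover have "finite (\<Union>g\<in>G. {b\<in>B. c b g \<noteq> 0})"
    using G(1) assms(3) unfolding fam_summable_def by auto
  ultimately show ?thesis by (rule finite_subset)
qed auto

end

theorem theorem2p5:
  fixes sA :: "'k::field \<Rightarrow> 'a::ab_group_add \<Rightarrow> 'a" and mA :: "'a \<Rightarrow> 'a \<Rightarrow> 'a"
    and sS :: "'k \<Rightarrow> 's::comm_ring_1 \<Rightarrow> 's"
    and sT :: "'k \<Rightarrow> 't::ab_group_add \<Rightarrow> 't" and tn :: "'a \<Rightarrow> 's \<Rightarrow> 't" and mT :: "'t \<Rightarrow> 't \<Rightarrow> 't"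
    and sC :: "'k \<Rightarrow> 'c::ab_group_add \<Rightarrow> 'c" and tc :: "('a \<Rightarrow> 'a) \<Rightarrow> 's \<Rightarrow> 'c"
  assumes A_alg: "is_algebra sA mA"
    and A_perfect: "perfect sA mA"
    and S_vs: "vector_space sS"
    and S_alg: "\<forall>c x y. sS c (x * y) = sS c x * y"
    and T_tensor: "is_tensor_product sA UNIV sS sT tn"
    and T_alg: "is_algebra sT mT"
    and T_mult: "\<forall>a b s t. mT (tn a s) (tn b t) = tn (mA a b) (s * t)"
  shows
    "(\<forall>\<psi> :: 'c \<Rightarrow> ('t \<Rightarrow> 't).
        is_tensor_product (fscale sA) (centroid sA mA) sS sC tc \<and>
        Vector_Spaces.linear sC (fscale sT) \<psi> \<and>
        (\<forall>\<gamma> \<in> centroid sA mA. \<forall>s. \<psi> (tc \<gamma> s) = tensor_op sT tn \<gamma> ((*) s)) \<and>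
        bij_betw \<psi> UNIV (centroid sT mT)
        \<longrightarrow> star_decomp sA mA sS sT tn mT)
     \<and> ((finite_dim sS \<or> alg_fin_gen sA mA \<or> pfgc sA mA \<or> unital_alg mA)
        \<longrightarrow> star_decomp sA mA sS sT tn mT)
     \<and> ((finite_dim sA \<or> finite_dim sS \<or>
         ((finite_dim_subspace (fscale sA) (centroid sA mA) \<or> alg_fin_gen sS (*)) \<and>
          (alg_fin_gen sA mA \<or>
           (fin_gen_module (centroid sA mA) \<and>
             (\<forall>d \<in> derivations sA mA. \<forall>\<gamma> \<in> centroid sA mA. d \<circ> \<gamma> = \<gamma> \<circ> d)) \<or>
           fin_gen_module (dcentroid sA mA))))
        \<longrightarrow> plain_decomp sA mA sS sT tn mT)"
proof -
  have vA: "vector_space sA" using A_alg by (simp add: is_algebra_def)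
  have vT: "vector_space sT" using T_alg by (simp add: is_algebra_def)
  interpret T: TT sA mA sS sT tn mT
    by (intro TT.intro TT_axioms.intro vA S_vs vT A_alg A_perfect S_alg T_tensor T_alg T_mult)
  have dC_sub: "dcentroid sA mA \<subseteq> centroid sA mA" unfolding dcentroid_def by auto
  have star_of: "star_decomp sA mA sS sT tn mT"
    if H: "\<And>B. T.fA.independent B \<Longrightarrow> T.fA.span B = centroid sA mA \<Longrightarrow> T.CTexp B"
  proof -
    show ?thesis unfolding star_decomp_def
    proof (intro allI impI)
      fix B assume "is_basis_of (fscale sA) (centroid sA mA) B"
      then have B: "B \<subseteq> centroid sA mA" "T.fA.independent B" "T.fA.span B = centroid sA mA"
        unfolding is_basis_of_def by auto
      show "direct_sum_decomp (derivations sT mT)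
          (left_tensor sT tn (derivations sA mA) (range (\<lambda>s. (*) s)))
          (right_tensor sT tn B (derivations sS (*)))"
        by (rule T.star_CT[OF B(2) B(1) H[OF B(2) B(3)]])
    qed
  qed
  have FinC_b: "T.FinC" if "fin_gen_module (centroid sA mA)"
  proof -
    have "\<exists>G. finite G \<and> (\<forall>\<theta>\<in>centroid sA mA. (\<forall>g\<in>G. \<theta> g = 0) \<longrightarrow> \<theta> = (\<lambda>_. 0))"
    proof (rule T.Fin_mod[OF that order_refl])
      fix \<theta> \<gamma> x assume "\<theta> \<in> centroid sA mA" "\<gamma> \<in> centroid sA mA"
      then show "\<theta> (\<gamma> x) = \<gamma> (\<theta> x)" by (rule T.cen_comm)
    qed (rule T.cen_lin)
    then show ?thesis unfolding T.FinC_def .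
  qed
  have FinC_pfgc: "T.FinC" if "pfgc sA mA"
    using that unfolding pfgc_def by (intro FinC_b) simp
  have P1: "\<forall>\<psi> :: 'c \<Rightarrow> ('t \<Rightarrow> 't).
        is_tensor_product (fscale sA) (centroid sA mA) sS sC tc \<and>
        Vector_Spaces.linear sC (fscale sT) \<psi> \<and>
        (\<forall>\<gamma> \<in> centroid sA mA. \<forall>s. \<psi> (tc \<gamma> s) = tensor_op sT tn \<gamma> ((*) s)) \<and>
        bij_betw \<psi> UNIV (centroid sT mT)
        \<longrightarrow> star_decomp sA mA sS sT tn mT"
  proof (intro allI impI)
    fix \<psi> :: "'c \<Rightarrow> ('t \<Rightarrow> 't)"
    assume H: "is_tensor_product (fscale sA) (centroid sA mA) sS sC tc \<and>
        Vector_Spaces.linear sC (fscale sT) \<psi> \<and>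
        (\<forall>\<gamma> \<in> centroid sA mA. \<forall>s. \<psi> (tc \<gamma> s) = tensor_op sT tn \<gamma> ((*) s)) \<and>
        bij_betw \<psi> UNIV (centroid sT mT)"
    show "star_decomp sA mA sS sT tn mT"
      by (rule star_of, rule T.CT_psi[of sC tc \<psi>]) (use H in auto)
  qed
  have P2: "(finite_dim sS \<or> alg_fin_gen sA mA \<or> pfgc sA mA \<or> unital_alg mA)
        \<longrightarrow> star_decomp sA mA sS sT tn mT"
  proof
    assume h: "finite_dim sS \<or> alg_fin_gen sA mA \<or> pfgc sA mA \<or> unital_alg mA"
    have "finite T.JB \<or> T.FinC"
      using h
    proof (elim disjE)
      assume "finite_dim sS" then show ?thesis by (intro disjI1 T.JB_fin)
    next
      assume "alg_fin_gen sA mA" then show ?thesis by (intro disjI2 T.FinC_fg)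
    next
      assume "pfgc sA mA" then show ?thesis by (intro disjI2 FinC_pfgc)
    next
      assume "unital_alg mA" then show ?thesis by (intro disjI2 T.FinC_unital)
    qed
    then show "star_decomp sA mA sS sT tn mT"
      by (intro star_of T.CT_fin) (auto simp: T.FinC_def)
  qed
  have P3: "(finite_dim sA \<or> finite_dim sS \<or>
         ((finite_dim_subspace (fscale sA) (centroid sA mA) \<or> alg_fin_gen sS (*)) \<and>
          (alg_fin_gen sA mA \<or>
           (fin_gen_module (centroid sA mA) \<and>
             (\<forall>d \<in> derivations sA mA. \<forall>\<gamma> \<in> centroid sA mA. d \<circ> \<gamma> = \<gamma> \<circ> d)) \<or>
           fin_gen_module (dcentroid sA mA))))
        \<longrightarrow> plain_decomp sA mA sS sT tn mT"
  proof
    assume h: "finite_dim sA \<or> finite_dim sS \<or>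
         ((finite_dim_subspace (fscale sA) (centroid sA mA) \<or> alg_fin_gen sS (*)) \<and>
          (alg_fin_gen sA mA \<or>
           (fin_gen_module (centroid sA mA) \<and>
             (\<forall>d \<in> derivations sA mA. \<forall>\<gamma> \<in> centroid sA mA. d \<circ> \<gamma> = \<gamma> \<circ> d)) \<or>
           fin_gen_module (dcentroid sA mA)))"
    obtain B where B: "B \<subseteq> centroid sA mA" "T.fA.independent B" "centroid sA mA \<subseteq> T.fA.span B"
      "card B = T.fA.dim (centroid sA mA)"
      by (rule T.fA.basis_exists)
    have spB: "T.fA.span B = centroid sA mA"
      by (rule equalityI[OF T.fA.span_minimal[OF B(1) T.cen_subspace] B(3)])
    have FinC_c: "T.FinC" if "fin_gen_module (dcentroid sA mA)"
    proof -
      have "\<exists>G. finite G \<and> (\<forall>\<theta>\<in>centroid sA mA. (\<forall>g\<in>G. \<theta> g = 0) \<longrightarrow> \<theta> = (\<lambda>_. 0))"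
      proof (rule T.Fin_mod[OF that dC_sub])
        fix \<theta> \<gamma> x assume "\<theta> \<in> centroid sA mA" "\<gamma> \<in> dcentroid sA mA"
        then show "\<theta> (\<gamma> x) = \<gamma> (\<theta> x)" using dC_sub by (intro T.cen_comm) auto
      qed (rule T.cen_lin)
      then show ?thesis unfolding T.FinC_def .
    qed
    have FinD_b: "T.FinD" if "fin_gen_module (centroid sA mA)"
      "\<forall>d \<in> derivations sA mA. \<forall>\<gamma> \<in> centroid sA mA. d \<circ> \<gamma> = \<gamma> \<circ> d"
    proof -
      have "\<exists>G. finite G \<and> (\<forall>\<theta>\<in>derivations sA mA. (\<forall>g\<in>G. \<theta> g = 0) \<longrightarrow> \<theta> = (\<lambda>_. 0))"
      proof (rule T.Fin_mod[OF that(1) order_refl])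
        fix \<theta> \<gamma> x assume "\<theta> \<in> derivations sA mA" "\<gamma> \<in> centroid sA mA"
        then have "\<theta> \<circ> \<gamma> = \<gamma> \<circ> \<theta>" using that(2) by blast
        then show "\<theta> (\<gamma> x) = \<gamma> (\<theta> x)" by (metis comp_apply)
      qed (rule T.der_lin)
      then show ?thesis unfolding T.FinD_def .
    qed
    have FinD_c: "T.FinD" if "fin_gen_module (dcentroid sA mA)"
    proof -
      have "\<exists>G. finite G \<and> (\<forall>\<theta>\<in>derivations sA mA. (\<forall>g\<in>G. \<theta> g = 0) \<longrightarrow> \<theta> = (\<lambda>_. 0))"
      proof (rule T.Fin_mod[OF that dC_sub])
        fix \<theta> \<gamma> x assume "\<theta> \<in> derivations sA mA" "\<gamma> \<in> dcentroid sA mA"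
        then have "\<gamma> \<circ> \<theta> = \<theta> \<circ> \<gamma>" unfolding dcentroid_def by blast
        then show "\<theta> (\<gamma> x) = \<gamma> (\<theta> x)" by (metis comp_apply)
      qed (rule T.der_lin)
      then show ?thesis unfolding T.FinD_def .
    qed
    have C12: "(finite T.JB \<or> T.FinC) \<and> (finite T.JB \<or> T.FinD)"
      using h
    proof (elim disjE conjE)
      assume "finite_dim sA" then show ?thesis using T.FinC_fd T.FinD_fd by blast
    next
      assume "finite_dim sS" then show ?thesis using T.JB_fin by blast
    next
      assume "alg_fin_gen sA mA" then show ?thesis using T.FinC_fg T.FinD_fg by blast
    next
      assume "fin_gen_module (centroid sA mA)" "\<forall>d \<in> derivations sA mA. \<forall>\<gamma> \<in> centroid sA mA. d \<circ> \<gamma> = \<gamma> \<circ> d"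
      then show ?thesis using FinC_b FinD_b by blast
    next
      assume "fin_gen_module (dcentroid sA mA)" then show ?thesis using FinC_c FinD_c by blast
    next
      assume "alg_fin_gen sA mA" then show ?thesis using T.FinC_fg T.FinD_fg by blast
    next
      assume "fin_gen_module (centroid sA mA)" "\<forall>d \<in> derivations sA mA. \<forall>\<gamma> \<in> centroid sA mA. d \<circ> \<gamma> = \<gamma> \<circ> d"
      then show ?thesis using FinC_b FinD_b by blast
    next
      assume "fin_gen_module (dcentroid sA mA)" then show ?thesis using FinC_c FinD_c by blast
    qed
    then have C1: "finite T.JB \<or> T.FinC" and C2: "finite T.JB \<or> T.FinD" by auto
    have C3: "finite B \<or> T.FinDS"
      using h
    proof (elim disjE conjE)
      assume "finite_dim sA" then show ?thesis using T.B_fin_A[OF _ B(2) B(1)] by blast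
    next
      assume "finite_dim sS" then show ?thesis using T.FinDS_fd by blast
    qed (auto intro: T.B_fin_C[OF _ B(2) B(1)] T.FinDS_fg)
    have ct: "T.CTexp B" by (rule T.CT_fin[OF B(2) spB]) (use C1 in \<open>auto simp: T.FinC_def\<close>)
    show "plain_decomp sA mA sS sT tn mT"
      by (rule T.plain_CT[OF B(2) B(1) ct]) (auto intro: T.HL_of[OF C2] T.HR_of[OF C3])
  qed
  show ?thesis using P1 P2 P3 by blast
qed


end
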